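(* Let $k$ be a field, $Q=(Q_0,Q_1)$ a quiver, and $\widehat{T}_{\Sigma}(V)$ the associated complete tensor algebra (complete path algebra). Let $G$ be a homogeneous group of continuous algebra automorphisms of $\widehat{T}_{\Sigma}(V)$ which is invariant on $\Sigma$. Let $\omega$ be any space of path of length $m\ge1$, and fix, for every subpath $\omega'$ of $\omega$, a space of irreducible invariants $V^G_{\omega',\mathrm{irr}}$. Then the canonical map $$\psi_{\omega}:\bigoplus_{p} V^G_{\omega,p,\mathrm{irr}}\longrightarrow V^G_{\omega},$$ where $p$ runs through all ordered partitions of $m$, is bijective.
   Context: $k$ is a discrete topological field. For $i,j\in Q_0$, $VQ_{i,j}$ is the $k$-vector space spanned by the arrows of $Q$ from $i$ to $j$. $\Sigma=\prod_{i\in Q_0}ke_i$, $V=\prod_{i,j\in Q_0}VQ_{i,j}$ (a pseudocompact $\Sigma$-bimodule), $V^{\widehat{\otimes}_0}=\Sigma$, $V^{\widehat{\otimes}_n}=V\widehat{\otimes}_{\Sigma}V^{\widehat{\otimes}_{n-1}}$ (completed tensor product over $\Sigma$), and $\widehat{T}_{\Sigma}(V)=\prod_{n\ge0}V^{\widehat{\otimes}_n}$ with the product topology and multiplication given by the completed tensor product. A continuous algebra automorphism $g$ is homogeneous if $g(V^{\widehat{\otimes}_n})=V^{\widehat{\otimes}_n}$ for all $n\in\mathbb{N}$; a group is homogeneous if all its elements are. $G$ is invariant on $\Sigma$ means every element of $G$ acts as the identity on $\Sigma$; then each $V^{\widehat{\otimes}_n}$ is a $kG$-module and $G$ preserves the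 subspaces below. For a $G$-stable subspace $W$, $W^G$ denotes the fixed points. An arrow space is a nonzero $V_a=VQ_{i,j}$. For a sequence of arrow spaces $V_{a_1},\dots,V_{a_m}$ with $V_{a_n}=VQ_{i_{n-1},i_n}$, $V_\omega=V_{a_m}\widehat{\otimes}_\Sigma\cdots\widehat{\otimes}_\Sigma V_{a_1}\subseteq V^{\widehat{\otimes}_m}$ is a space of path $\omega$ from $i_0$ to $i_m$ of length $m$; spaces of the form $V_{a_t}\widehat{\otimes}_\Sigma\cdots\widehat{\otimes}_\Sigma V_{a_s}$ are its subpaths. A 2-partition $\omega=\omega_2\omega_1$ is a pair of subpaths with $V_\omega=V_{\omega_2}\widehat{\otimes}_\Sigma V_{\omega_1}$; $\varphi_{\omega_1,\omega_2}:V^G_{\omega_2}\widehat{\otimes}_\Sigma V^G_{\omega_1}\to V^G_\omega$ is the canonical map, and $\varphi_\omega=\sum_{\omega_2\omega_1=\omega}\varphi_{\omega_1,\omega_2}$. The image of $\varphi_\omega$ is the space of composite invariants; a space of irreducible invariants $V^G_{\omega,\mathrm{irr}}$ is any fixed complement of $\mathrm{Im}\,\varphi_\omega$ in $V^G_\omega$. For an ordered partition $p=(m_l,\dots,m_1)$ of $m$ into positive integers, write $\omega=\omega_{m_l}\cdots\omega_{m_1}$ with $\omega_{m_t}$ the unique subpath of length $m_t$ in this position, and set $V^G_{\omega,p,\mathrm{irr}}=V^G_{\omega_{m_l},\mathrm{irr}}\widehat{\otimes}_\Sigma\cdots\widehat{\otimes}_\Sigma V^G_{\omega_{m_1},\mathrm{irr}}$.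 The map $\psi_\omega$ is the sum of the canonical (multiplication) maps $V^G_{\omega,p,\mathrm{irr}}\to V^G_\omega$. *)

theory Defs
  imports Main "HOL-Library.FuncSet"
begin

text \<open>
The quiver is given by the types 'v (vertices Q0) and 'a (arrows Q1) with
source and target maps src, tgt.  The arrow space VQ(i,j) has the arrows
i -> j as a basis.  A space of path V_omega is determined by its vertex sequence
vs = [i_0, ..., i_m]; its elements are k-valued functions on arrow lists
[b_1, ..., b_m] (b_t an arrow i_(t-1) -> i_t), i.e. coordinates with respect to
the basis b_m (x) ... (x) b_1 of V_(a_m) (x) ... (x) V_(a_1).
The list index 0 corresponds to the first arrow b_1.
\<close>

definition paths :: "('a \<Rightarrow> 'v) \<Rightarrow> ('a \<Rightarrow> 'v) \<Rightarrow> 'v list \<Rightarrow> 'a list set" where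
  "paths src tgt vs = {as. length as + 1 = length vs \<and>
      (\<forall>t<length as. src (as ! t) = vs ! t \<and> tgt (as ! t) = vs ! Suc t)}"

definition is_path_space :: "('a \<Rightarrow> 'v) \<Rightarrow> ('a \<Rightarrow> 'v) \<Rightarrow> 'v list \<Rightarrow> bool" where
  "is_path_space src tgt vs \<longleftrightarrow> 2 \<le> length vs \<and>
      (\<forall>t. Suc t < length vs \<longrightarrow> (\<exists>a. src a = vs ! t \<and> tgt a = vs ! Suc t))"

definition pspace :: "('a \<Rightarrow> 'v) \<Rightarrow> ('a \<Rightarrow> 'v) \<Rightarrow> 'v list \<Rightarrow> ('a list \<Rightarrow> 'k::zero) set" where
  "pspace src tgt vs = {f. \<forall>x. f x \<noteq> 0 \<longrightarrow> x \<in> paths src tgt vs}"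

definition same_shape :: "('a \<Rightarrow> 'v) \<Rightarrow> ('a \<Rightarrow> 'v) \<Rightarrow> 'a list \<Rightarrow> 'a list set" where
  "same_shape src tgt c = {b. length b = length c \<and>
      (\<forall>t<length c. src (b ! t) = src (c ! t) \<and> tgt (b ! t) = tgt (c ! t))}"

text \<open>A homogeneous automorphism invariant on Sigma is determined by its restriction
to V, a Sigma-bimodule automorphism of V, i.e. a family of invertible linear maps of
the VQ(i,j).  We represent it by its matrix g c b = coefficient of the arrow c in g(b).
Its action on V^(tensor n) is the diagonal one g(b_m (x)...(x) b_1) = g b_m (x)...(x) g b_1.\<close>
definition gact :: "('a \<Rightarrow> 'v) \<Rightarrow> ('a \<Rightarrow> 'v) \<Rightarrow> ('a \<Rightarrow> 'a \<Rightarrow> 'k::field)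
    \<Rightarrow> ('a list \<Rightarrow> 'k) \<Rightarrow> ('a list \<Rightarrow> 'k)" where
  "gact src tgt g f = (\<lambda>c. \<Sum>b\<in>same_shape src tgt c. (\<Prod>t<length c. g (c ! t) (b ! t)) * f b)"

definition mat_id :: "'a \<Rightarrow> 'a \<Rightarrow> 'k::field" where
  "mat_id c b = (if c = b then 1 else 0)"

definition mat_comp :: "('a \<Rightarrow> 'v) \<Rightarrow> ('a \<Rightarrow> 'v) \<Rightarrow> ('a \<Rightarrow> 'a \<Rightarrow> 'k::field)
    \<Rightarrow> ('a \<Rightarrow> 'a \<Rightarrow> 'k) \<Rightarrow> ('a \<Rightarrow> 'a \<Rightarrow> 'k)" where
  "mat_comp src tgt g h = (\<lambda>c b. \<Sum>d\<in>{d. src d = src b \<and> tgt d = tgt b}. g c d * h d b)"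

text \<open>G is a group (under composition) of Sigma-bimodule automorphisms of V,
equivalently a homogeneous group of continuous automorphisms of the complete
path algebra which is invariant on Sigma.\<close>
definition homog_group :: "('a \<Rightarrow> 'v) \<Rightarrow> ('a \<Rightarrow> 'v) \<Rightarrow> ('a \<Rightarrow> 'a \<Rightarrow> 'k::field) set \<Rightarrow> bool" where
  "homog_group src tgt G \<longleftrightarrow>
     (\<forall>g\<in>G. \<forall>c b. g c b \<noteq> 0 \<longrightarrow> src c = src b \<and> tgt c = tgt b) \<and>
     mat_id \<in> G \<and>
     (\<forall>g\<in>G. \<forall>h\<in>G. mat_comp src tgt g h \<in> G) \<and>
     (\<forall>g\<in>G. \<exists>h\<in>G. mat_comp src tgt g h = mat_id \<and> mat_comp src tgt h g = mat_id)"

definition invariants :: "('a \<Rightarrow> 'v) \<Rightarrow> ('a \<Rightarrow> 'v) \<Rightarrow> ('a \<Rightarrow> 'a \<Rightarrow> 'k::field) set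
    \<Rightarrow> 'v list \<Rightarrow> ('a list \<Rightarrow> 'k) set" where
  "invariants src tgt G vs = {f \<in> pspace src tgt vs. \<forall>g\<in>G. gact src tgt g f = f}"

definition seg :: "'v list \<Rightarrow> nat \<Rightarrow> nat \<Rightarrow> 'v list" where
  "seg vs s n = take (Suc n) (drop s vs)"

text \<open>Product (completed tensor product over Sigma = concatenation) of elements
fs = [f_1,...,f_l] of consecutive path spaces with lengths ns = [n_1,...,n_l];
f_1 lives on the first n_1 arrows.  This is the element f_l (x) ... (x) f_1.\<close>
fun tprodl :: "nat list \<Rightarrow> ('a list \<Rightarrow> 'k::comm_ring_1) list \<Rightarrow> 'a list \<Rightarrow> 'k" where
  "tprodl [] [] x = (if x = [] then 1 else 0)"
| "tprodl (n # ns) (f # fs) x = f (take n x) * tprodl ns fs (drop n x)"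
| "tprodl _ _ x = 0"

definition lspan :: "('b \<Rightarrow> 'k::field) set \<Rightarrow> ('b \<Rightarrow> 'k) set" where
  "lspan S = {(\<lambda>x. \<Sum>i<n. (c :: nat \<Rightarrow> 'k) i * fs i x) | n c fs. \<forall>i<n. fs i \<in> S}"

definition subsp :: "('b \<Rightarrow> 'k::field) set \<Rightarrow> bool" where
  "subsp W \<longleftrightarrow> (\<lambda>x. 0 :: 'k) \<in> W \<and> (\<forall>f\<in>W. \<forall>g\<in>W. (\<lambda>x. f x + g x) \<in> W) \<and>
     (\<forall>c :: 'k. \<forall>f\<in>W. (\<lambda>x. c * f x) \<in> W)"

text \<open>Image of varphi_omega: the space of composite invariants (sum over all
2-partitions omega = omega_2 omega_1 of the images of
V^G_(omega_2) (x) V^G_(omega_1)).\<close>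
definition composite :: "('a \<Rightarrow> 'v) \<Rightarrow> ('a \<Rightarrow> 'v) \<Rightarrow> ('a \<Rightarrow> 'a \<Rightarrow> 'k::field) set
    \<Rightarrow> 'v list \<Rightarrow> ('a list \<Rightarrow> 'k) set" where
  "composite src tgt G vs = lspan (\<Union>n\<in>{1..<length vs - 1}.
      {tprodl [n, length vs - 1 - n] [g, f] | g f.
         g \<in> invariants src tgt G (seg vs 0 n) \<and>
         f \<in> invariants src tgt G (seg vs n (length vs - 1 - n))})"

definition is_irr_space :: "('a \<Rightarrow> 'v) \<Rightarrow> ('a \<Rightarrow> 'v) \<Rightarrow> ('a \<Rightarrow> 'a \<Rightarrow> 'k::field) set
    \<Rightarrow> 'v list \<Rightarrow> ('a list \<Rightarrow> 'k) set \<Rightarrow> bool" where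
  "is_irr_space src tgt G vs C \<longleftrightarrow> subsp C \<and> C \<subseteq> invariants src tgt G vs \<and>
     (\<forall>f\<in>C. f \<in> composite src tgt G vs \<longrightarrow> f = (\<lambda>x. 0)) \<and>
     (\<forall>h\<in>invariants src tgt G vs. \<exists>f\<in>C. \<exists>g\<in>composite src tgt G vs. h = (\<lambda>x. f x + g x))"

text \<open>Ordered partitions of m, listed from the first subpath: [m_1, ..., m_l].\<close>
definition ord_partitions :: "nat \<Rightarrow> nat list set" where
  "ord_partitions m = {ps. ps \<noteq> [] \<and> (\<forall>x\<in>set ps. 0 < x) \<and> sum_list ps = m}"

text \<open>Image of V^G_(omega,p,irr) in V_omega (span of the products of irreducible
invariants of the pieces).\<close>
definition irr_prod :: "'v list \<Rightarrow> ('v list \<Rightarrow> ('a list \<Rightarrow> 'k::field) set) \<Rightarrow> nat list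
    \<Rightarrow> ('a list \<Rightarrow> 'k) set" where
  "irr_prod vs irr ps = lspan {tprodl ps fs | fs. length fs = length ps \<and>
      (\<forall>t<length ps. fs ! t \<in> irr (seg vs (sum_list (take t ps)) (ps ! t)))}"

end

theory Submission
  imports Defs
begin

definition tp :: "nat \<Rightarrow> ('a list \<Rightarrow> 'k::times) \<Rightarrow> ('a list \<Rightarrow> 'k) \<Rightarrow> 'a list \<Rightarrow> 'k" where
  "tp n a b = (\<lambda>x. a (take n x) * b (drop n x))"

definition sl :: "nat \<Rightarrow> 'a list \<Rightarrow> ('a list \<Rightarrow> 'k::zero) \<Rightarrow> 'a list \<Rightarrow> 'k" where
  "sl n z f = (\<lambda>x. if length x = n then f (x @ z) else 0)"

definition TP :: "nat \<Rightarrow> ('a list \<Rightarrow> 'k::field) set \<Rightarrow> ('a list \<Rightarrow> 'k) set \<Rightarrow> ('a list \<Rightarrow> 'k) set" where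
  "TP n A B = lspan {tp n a b | a b. a \<in> A \<and> b \<in> B}"

definition linop :: "(('b \<Rightarrow> 'k::field) \<Rightarrow> ('c \<Rightarrow> 'k)) \<Rightarrow> bool" where
  "linop L \<longleftrightarrow> (\<forall>f g. L (\<lambda>x. f x + g x) = (\<lambda>x. L f x + L g x)) \<and>
      (\<forall>c f. L (\<lambda>x. c * f x) = (\<lambda>x. c * L f x))"

definition sumset :: "'i set \<Rightarrow> ('i \<Rightarrow> ('b \<Rightarrow> 'k::field) set) \<Rightarrow> ('b \<Rightarrow> 'k) set" where
  "sumset F X = {(\<lambda>x. \<Sum>p\<in>F. w p x) | w. \<forall>p\<in>F. w p \<in> X p}"

lemma subsp_zero: "subsp W \<Longrightarrow> (\<lambda>x. 0) \<in> W" by (simp add: subsp_def)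
lemma subsp_add: "subsp W \<Longrightarrow> f \<in> W \<Longrightarrow> g \<in> W \<Longrightarrow> (\<lambda>x. f x + g x) \<in> W" by (simp add: subsp_def)
lemma subsp_scale: "subsp W \<Longrightarrow> f \<in> W \<Longrightarrow> (\<lambda>x. c * f x) \<in> W" by (simp add: subsp_def)
lemma subsp_neg: "subsp W \<Longrightarrow> f \<in> W \<Longrightarrow> (\<lambda>x. - f x) \<in> W"
  using subsp_scale[of W f "-1"] by simp
lemma subsp_diff: "subsp W \<Longrightarrow> f \<in> W \<Longrightarrow> g \<in> W \<Longrightarrow> (\<lambda>x. f x - g x) \<in> W"
  using subsp_add[of W f "\<lambda>x. - g x"] subsp_neg[of W g] by simp

lemma subsp_sum: fixes n :: nat assumes "subsp W" "\<forall>i<n. fs i \<in> W" shows "(\<lambda>x. \<Sum>i<n. c i * fs i x) \<in> W"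
  using assms(2)
proof (induction n)
  case 0 then show ?case using assms(1) by (simp add: subsp_def)
next
  case (Suc n)
  then have a: "(\<lambda>x. \<Sum>i<n. c i * fs i x) \<in> W" by simp
  have b: "(\<lambda>x. c n * fs n x) \<in> W" using Suc.prems assms(1) by (simp add: subsp_def)
  show ?case using subsp_add[OF assms(1) a b] by simp
qed

lemma subsp_setsum: assumes "subsp W" "\<forall>p\<in>F. w p \<in> W" shows "(\<lambda>x. \<Sum>p\<in>F. w p x) \<in> W"
proof (cases "finite F")
  case True
  then show ?thesis using assms(2)
  proof (induction F rule: finite_induct)
    case empty then show ?case using assms(1) by (simp add: subsp_def)
  next
    case (insert p F)
    then show ?case using subsp_add[OF assms(1), of "w p" "\<lambda>x. \<Sum>p\<in>F. w p x"] by simp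
  qed
next
  case False then show ?thesis using assms(1) by (simp add: subsp_def)
qed

lemma lspanI: assumes "\<forall>i<n. fs i \<in> S" shows "(\<lambda>x. \<Sum>i<(n::nat). c i * fs i x) \<in> lspan S"
  unfolding lspan_def using assms by (intro CollectI exI[of _ n] exI[of _ c] exI[of _ fs]) simp

lemma lspanE: assumes "f \<in> lspan S"
  obtains n c fs where "f = (\<lambda>x. \<Sum>i<(n::nat). c i * fs i x)" "\<forall>i<n. fs i \<in> S"
  using assms unfolding lspan_def by blast

lemma lspan_least: assumes "subsp W" "S \<subseteq> W" shows "lspan S \<subseteq> W"
proof
  fix f assume "f \<in> lspan S"
  then obtain n c fs where "f = (\<lambda>x. \<Sum>i<(n::nat). c i * fs i x)" "\<forall>i<n. fs i \<in> S"
    by (rule lspanE)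
  then show "f \<in> W" using subsp_sum[OF assms(1), of n fs c] assms(2) by auto
qed

lemma lspan_sub: "S \<subseteq> lspan S"
proof
  fix f assume "f \<in> S"
  then have "(\<lambda>x. \<Sum>i<(1::nat). (\<lambda>_. 1) i * (\<lambda>_. f) i x) \<in> lspan S" by (intro lspanI) simp
  then show "f \<in> lspan S" by simp
qed

lemma lspan_mono: assumes "A \<subseteq> B" shows "lspan A \<subseteq> lspan B"
proof
  fix f assume "f \<in> lspan A"
  then obtain n c fs where "f = (\<lambda>x. \<Sum>i<(n::nat). c i * fs i x)" "\<forall>i<n. fs i \<in> A"
    by (rule lspanE)
  then show "f \<in> lspan B" using lspanI[of n fs B c] assms by auto
qed

lemma sum_lessThan_add_split: "(\<Sum>i<(n1::nat)+n2. f i) = (\<Sum>i<n1. f i) + (\<Sum>i<n2. f (n1 + i))"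
  by (induction n2) (simp_all add: add.assoc)

lemma subsp_lspan: "subsp (lspan S)"
  unfolding subsp_def
proof (intro conjI ballI allI)
  show "(\<lambda>x. 0) \<in> lspan S" using lspanI[of 0 _ S] by simp
next
  fix f g assume fS: "f \<in> lspan S" and gS: "g \<in> lspan S"
  obtain n1 c1 fs1 where f: "f = (\<lambda>x. \<Sum>i<(n1::nat). c1 i * fs1 i x)" "\<forall>i<n1. fs1 i \<in> S"
    using fS by (rule lspanE)
  obtain n2 c2 fs2 where g: "g = (\<lambda>x. \<Sum>i<(n2::nat). c2 i * fs2 i x)" "\<forall>i<n2. fs2 i \<in> S"
    using gS by (rule lspanE)
  define c where "c i = (if i < n1 then c1 i else c2 (i - n1))" for i
  define fs where "fs i = (if i < n1 then fs1 i else fs2 (i - n1))" for i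
  have "(\<lambda>x. f x + g x) = (\<lambda>x. \<Sum>i<n1+n2. c i * fs i x)"
    unfolding sum_lessThan_add_split f(1) g(1) c_def fs_def by simp
  moreover have "\<forall>i<n1+n2. fs i \<in> S" using f(2) g(2) unfolding fs_def by auto
  ultimately show "(\<lambda>x. f x + g x) \<in> lspan S" using lspanI[of "n1+n2" fs S c] by simp
next
  fix d f assume "f \<in> lspan S"
  then obtain n c fs where f: "f = (\<lambda>x. \<Sum>i<(n::nat). c i * fs i x)" "\<forall>i<n. fs i \<in> S"
    by (rule lspanE)
  have "(\<lambda>x. d * f x) = (\<lambda>x. \<Sum>i<n. (d * c i) * fs i x)"
    unfolding f(1) by (simp add: sum_distrib_left mult.assoc)
  then show "(\<lambda>x. d * f x) \<in> lspan S" using lspanI[of n fs S "\<lambda>i. d * c i"] f(2) by simp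
qed

lemma lspan_idem: "subsp W \<Longrightarrow> lspan W = W"
  using lspan_least[of W W] lspan_sub[of W] by blast

lemma lspan_least': "subsp W \<Longrightarrow> S \<subseteq> W \<Longrightarrow> f \<in> lspan S \<Longrightarrow> f \<in> W"
  using lspan_least by blast

lemma linop_add: assumes "linop L" shows "L (\<lambda>x. f x + g x) = (\<lambda>x. L f x + L g x)"
proof -
  have "\<forall>f g. L (\<lambda>x. f x + g x) = (\<lambda>x. L f x + L g x)" using assms unfolding linop_def by (rule conjunct1)
  then show ?thesis by simp
qed
lemma linop_scale: assumes "linop L" shows "L (\<lambda>x. c * f x) = (\<lambda>x. c * L f x)"
proof -
  have "\<forall>c f. L (\<lambda>x. c * f x) = (\<lambda>x. c * L f x)" using assms unfolding linop_def by (rule conjunct2)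
  then show ?thesis by simp
qed
lemma linop_zero: assumes "linop L" shows "L (\<lambda>x. 0) = (\<lambda>x. 0)"
  using linop_scale[OF assms, of 0 "\<lambda>x. 0"] by simp

lemma subsp_preimage: assumes "linop L" "subsp X" shows "subsp {f. L f \<in> X}"
  unfolding subsp_def
proof (intro conjI ballI allI)
  show "(\<lambda>x. 0) \<in> {f. L f \<in> X}" using linop_zero[OF assms(1)] subsp_zero[OF assms(2)] by simp
next
  fix f g assume "f \<in> {f. L f \<in> X}" "g \<in> {f. L f \<in> X}"
  then have a: "L f \<in> X" "L g \<in> X" by auto
  have e: "L (\<lambda>x. f x + g x) = (\<lambda>x. L f x + L g x)" by (rule linop_add[OF assms(1)])
  show "(\<lambda>x. f x + g x) \<in> {f. L f \<in> X}" unfolding mem_Collect_eq e by (rule subsp_add[OF assms(2) a])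
next
  fix c f assume "f \<in> {f. L f \<in> X}"
  then have a: "L f \<in> X" by auto
  have e: "L (\<lambda>x. c * f x) = (\<lambda>x. c * L f x)" by (rule linop_scale[OF assms(1)])
  show "(\<lambda>x. c * f x) \<in> {f. L f \<in> X}" unfolding mem_Collect_eq e by (rule subsp_scale[OF assms(2) a])
qed

lemma lspan_linop: assumes "linop L" "subsp X" "\<forall>s\<in>S. L s \<in> X" "f \<in> lspan S" shows "L f \<in> X"
proof -
  have "S \<subseteq> {f. L f \<in> X}" using assms(3) by auto
  from lspan_least[OF subsp_preimage[OF assms(1,2)] this] assms(4) show ?thesis by auto
qed

lemma sumsetI: "\<forall>p\<in>F. w p \<in> X p \<Longrightarrow> (\<lambda>x. \<Sum>p\<in>F. w p x) \<in> sumset F X"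
  unfolding sumset_def by (intro CollectI exI[of _ w]) simp

lemma sumsetE: assumes "f \<in> sumset F X" obtains w where "f = (\<lambda>x. \<Sum>p\<in>F. w p x)" "\<forall>p\<in>F. w p \<in> X p"
  using assms unfolding sumset_def by blast

lemma subsp_sumset: assumes "\<forall>p\<in>F. subsp (X p)" shows "subsp (sumset F X)"
  unfolding subsp_def
proof (intro conjI ballI allI)
  have "\<forall>p\<in>F. (\<lambda>p x. 0) p \<in> X p" using assms subsp_zero by auto
  from sumsetI[OF this] show "(\<lambda>x. 0) \<in> sumset F X" by simp
next
  fix f g assume fS: "f \<in> sumset F X" and gS: "g \<in> sumset F X"
  obtain w1 where 1: "f = (\<lambda>x. \<Sum>p\<in>F. w1 p x)" "\<forall>p\<in>F. w1 p \<in> X p" using fS by (rule sumsetE)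
  obtain w2 where 2: "g = (\<lambda>x. \<Sum>p\<in>F. w2 p x)" "\<forall>p\<in>F. w2 p \<in> X p" using gS by (rule sumsetE)
  have "\<forall>p\<in>F. (\<lambda>p x. w1 p x + w2 p x) p \<in> X p" using assms 1(2) 2(2) by (auto intro!: subsp_add)
  from sumsetI[OF this] show "(\<lambda>x. f x + g x) \<in> sumset F X" unfolding 1(1) 2(1) by (simp add: sum.distrib)
next
  fix c f assume "f \<in> sumset F X"
  then obtain w1 where 1: "f = (\<lambda>x. \<Sum>p\<in>F. w1 p x)" "\<forall>p\<in>F. w1 p \<in> X p" by (rule sumsetE)
  have "\<forall>p\<in>F. (\<lambda>p x. c * w1 p x) p \<in> X p" using assms 1(2) by (auto intro!: subsp_scale)
  from sumsetI[OF this] show "(\<lambda>x. c * f x) \<in> sumset F X" unfolding 1(1) by (simp add: sum_distrib_left)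
qed

lemma lspan_union_sumset: assumes "finite F" "\<forall>p\<in>F. subsp (X p)"
  shows "lspan (\<Union>p\<in>F. X p) \<subseteq> sumset F X"
proof (rule lspan_least[OF subsp_sumset[OF assms(2)]], rule subsetI)
  fix f assume "f \<in> (\<Union>p\<in>F. X p)"
  then obtain q where q: "q \<in> F" "f \<in> X q" by blast
  define w where "w p = (\<lambda>x. if p = q then f x else 0)" for p
  have "(\<lambda>x. \<Sum>p\<in>F. w p x) = f" using q assms(1) unfolding w_def
    by (simp add: sum.delta)
  moreover have "\<forall>p\<in>F. w p \<in> X p"
  proof
    fix p assume p: "p \<in> F"
    show "w p \<in> X p"
    proof (cases "p = q")
      case True then show ?thesis using q unfolding w_def by simp
    next
      case False then show ?thesis using assms(2) p subsp_zero[of "X p"] unfolding w_def by simp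
    qed
  qed
  ultimately show "f \<in> sumset F X" using sumsetI[of F w X] by simp
qed

lemma subsp_TP: "subsp (TP n A B)" unfolding TP_def by (rule subsp_lspan)

lemma TP_gen: "a \<in> A \<Longrightarrow> b \<in> B \<Longrightarrow> tp n a b \<in> TP n A B"
proof -
  assume "a \<in> A" "b \<in> B"
  then have "tp n a b \<in> {tp n a b | a b. a \<in> A \<and> b \<in> B}" by auto
  then show ?thesis unfolding TP_def using lspan_sub by (rule subsetD[rotated])
qed

lemma TP_mono: "A \<subseteq> A' \<Longrightarrow> B \<subseteq> B' \<Longrightarrow> TP n A B \<subseteq> TP n A' B'"
  unfolding TP_def by (rule lspan_mono) auto

lemma linop_tp_right: "linop (tp n a)"
  unfolding linop_def tp_def by (simp add: algebra_simps)
lemma linop_tp_left: "linop (\<lambda>a. tp n a b)"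
  unfolding linop_def tp_def by (simp add: algebra_simps)

lemma TP_least: assumes "subsp X" "\<forall>a\<in>A. \<forall>b\<in>B. tp n a b \<in> X" shows "TP n A B \<subseteq> X"
  unfolding TP_def using assms by (intro lspan_least) auto


lemma paths_len: "x \<in> paths src tgt ws \<Longrightarrow> length x + 1 = length ws"
  unfolding paths_def by simp

lemma paths_split:
  assumes k: "k < length ws"
  shows "x \<in> paths src tgt ws \<longleftrightarrow>
     take k x \<in> paths src tgt (take (Suc k) ws) \<and> drop k x \<in> paths src tgt (drop k ws)"
proof
  assume x: "x \<in> paths src tgt ws"
  then have l: "length x + 1 = length ws" and
    e: "\<forall>t<length x. src (x ! t) = ws ! t \<and> tgt (x ! t) = ws ! Suc t"
    unfolding paths_def by auto
  have "take k x \<in> paths src tgt (take (Suc k) ws)"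
    unfolding paths_def using l k e by auto
  moreover have "drop k x \<in> paths src tgt (drop k ws)"
    unfolding paths_def using l k e by auto
  ultimately show "take k x \<in> paths src tgt (take (Suc k) ws) \<and> drop k x \<in> paths src tgt (drop k ws)" by simp
next
  assume "take k x \<in> paths src tgt (take (Suc k) ws) \<and> drop k x \<in> paths src tgt (drop k ws)"
  then have 1: "length (take k x) + 1 = length (take (Suc k) ws)"
     "\<forall>t<length (take k x). src (take k x ! t) = take (Suc k) ws ! t \<and> tgt (take k x ! t) = take (Suc k) ws ! Suc t"
    and 2: "length (drop k x) + 1 = length (drop k ws)"
     "\<forall>t<length (drop k x). src (drop k x ! t) = drop k ws ! t \<and> tgt (drop k x ! t) = drop k ws ! Suc t"
    unfolding paths_def by auto
  have kx: "k \<le> length x" using 1(1) k by auto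
  have l: "length x + 1 = length ws" using 2(1) kx k by auto
  have "\<forall>t<length x. src (x ! t) = ws ! t \<and> tgt (x ! t) = ws ! Suc t"
  proof (intro allI impI)
    fix t assume t: "t < length x"
    show "src (x ! t) = ws ! t \<and> tgt (x ! t) = ws ! Suc t"
    proof (cases "t < k")
      case True
      then show ?thesis using 1(2)[rule_format, of t] kx by simp
    next
      case False
      then obtain i where i: "t = k + i" using le_Suc_ex by (metis not_less)
      then have "i < length (drop k x)" using t by simp
      then show ?thesis using 2(2)[rule_format, of i] i kx l by (simp add: add.commute)
    qed
  qed
  then show "x \<in> paths src tgt ws" unfolding paths_def using l by simp
qed

lemma pspace_iff: "f \<in> pspace src tgt ws \<longleftrightarrow> (\<forall>x. f x \<noteq> 0 \<longrightarrow> x \<in> paths src tgt ws)"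
  unfolding pspace_def by simp

lemma pspace_zero_out: "f \<in> pspace src tgt ws \<Longrightarrow> x \<notin> paths src tgt ws \<Longrightarrow> f x = 0"
  unfolding pspace_def by auto

lemma pspace_len: "f \<in> pspace src tgt ws \<Longrightarrow> length x + 1 \<noteq> length ws \<Longrightarrow> f x = 0"
  using pspace_zero_out paths_len by metis

lemma subsp_pspace: "subsp (pspace src tgt ws :: ('a list \<Rightarrow> 'k::field) set)"
  unfolding subsp_def pspace_def by (auto) (metis add.right_neutral add_0)

lemma pspace_tp:
  fixes a b :: "'a list \<Rightarrow> 'k::field"
  assumes k: "k < length ws" and a: "a \<in> pspace src tgt (take (Suc k) ws)" and b: "b \<in> pspace src tgt (drop k ws)"
  shows "tp k a b \<in> pspace src tgt ws"
  unfolding pspace_iff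
proof (intro allI impI)
  fix x assume "tp k a b x \<noteq> 0"
  then have "a (take k x) \<noteq> 0" "b (drop k x) \<noteq> 0" unfolding tp_def by auto
  then have "take k x \<in> paths src tgt (take (Suc k) ws)" "drop k x \<in> paths src tgt (drop k ws)"
    using a b unfolding pspace_def by auto
  then show "x \<in> paths src tgt ws" using paths_split[OF k, of x src tgt] by simp
qed

lemma pspace_sl:
  fixes b :: "'a list \<Rightarrow> 'k::field"
  assumes b: "b \<in> pspace src tgt ws"
  shows "sl j z b \<in> pspace src tgt (take (Suc j) ws)"
  unfolding pspace_iff
proof (intro allI impI)
  fix x assume "sl j z b x \<noteq> 0"
  then have lx: "length x = j" and "b (x @ z) \<noteq> 0" unfolding sl_def by (auto split: if_splits)
  then have p: "x @ z \<in> paths src tgt ws" using b unfolding pspace_def by auto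
  then have "j < length ws" using paths_len[OF p] lx by simp
  from paths_split[OF this, of "x @ z" src tgt] p lx show "x \<in> paths src tgt (take (Suc j) ws)" by simp
qed

lemma tp_sl_zero_short:
  fixes a b :: "'a list \<Rightarrow> 'k::field"
  assumes a: "a \<in> pspace src tgt ws" "length ws = Suc n" "length x < n"
  shows "tp n a b x = 0"
  using assms pspace_len[OF a(1), of x] unfolding tp_def by simp

lemma finite_same_shape:
  assumes fin: "\<forall>i j. finite {a. src a = i \<and> tgt a = j}"
  shows "finite (same_shape src tgt c)"
proof -
  define A where "A = (\<Union>t<length c. {a. src a = src (c ! t) \<and> tgt a = tgt (c ! t)})"
  have "finite A" unfolding A_def using fin by auto
  have "same_shape src tgt c \<subseteq> {xs. set xs \<subseteq> A \<and> length xs = length c}"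
  proof
    fix b assume b: "b \<in> same_shape src tgt c"
    then have l: "length b = length c" and e: "\<forall>t<length c. src (b ! t) = src (c ! t) \<and> tgt (b ! t) = tgt (c ! t)"
      unfolding same_shape_def by auto
    have "set b \<subseteq> A"
    proof
      fix y assume "y \<in> set b"
      then obtain t where "t < length b" "y = b ! t" by (metis in_set_conv_nth)
      then show "y \<in> A" using l e unfolding A_def by auto
    qed
    then show "b \<in> {xs. set xs \<subseteq> A \<and> length xs = length c}" using l by simp
  qed
  then show ?thesis using finite_lists_length_eq[OF \<open>finite A\<close>] finite_subset by blast
qed

lemma linop_gact: "linop (gact src tgt g)"
  unfolding linop_def gact_def by (simp add: algebra_simps sum.distrib sum_distrib_left)

lemma gact_pspace:
  assumes f: "f \<in> pspace src tgt ws" shows "gact src tgt g f \<in> pspace src tgt ws"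
  unfolding pspace_iff
proof (intro allI impI)
  fix c assume "gact src tgt g f c \<noteq> 0"
  then obtain b where b: "b \<in> same_shape src tgt c" and "(\<Prod>t<length c. g (c ! t) (b ! t)) * f b \<noteq> 0"
    unfolding gact_def by (rule sum.not_neutral_contains_not_neutral)
  then have "f b \<noteq> 0" by auto
  then have p: "b \<in> paths src tgt ws" using f unfolding pspace_def by auto
  from b have "length b = length c" "\<forall>t<length c. src (b ! t) = src (c ! t) \<and> tgt (b ! t) = tgt (c ! t)"
    unfolding same_shape_def by auto
  with p show "c \<in> paths src tgt ws" unfolding paths_def by auto
qed

lemma prod_lessThan_add_split: "(\<Prod>i<(n1::nat)+n2. f i) = (\<Prod>i<n1. f i) * (\<Prod>i<n2. f (n1 + i))"
  by (induction n2) (simp_all add: mult.assoc)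

lemma prod_append:
  assumes "length b1 = length c1" "length b2 = length c2"
  shows "(\<Prod>t<length (c1 @ c2). g ((c1 @ c2) ! t) ((b1 @ b2) ! t)) =
    (\<Prod>t<length c1. g (c1 ! t) (b1 ! t)) * (\<Prod>t<length c2. g (c2 ! t) (b2 ! t))"
proof -
  have "(\<Prod>t<length (c1 @ c2). g ((c1 @ c2) ! t) ((b1 @ b2) ! t)) =
     (\<Prod>t<length c1. g ((c1 @ c2) ! t) ((b1 @ b2) ! t)) * (\<Prod>i<length c2. g ((c1 @ c2) ! (length c1 + i)) ((b1 @ b2) ! (length c1 + i)))"
    by (simp add: prod_lessThan_add_split)
  also have "\<dots> = (\<Prod>t<length c1. g (c1 ! t) (b1 ! t)) * (\<Prod>t<length c2. g (c2 ! t) (b2 ! t))"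
    using assms by (simp add: nth_append)
  finally show ?thesis .
qed

lemma gact_tp_aux:
  fixes g :: "'a \<Rightarrow> 'a \<Rightarrow> 'k::field"
  assumes fin: "\<forall>i j. finite {a. src a = i \<and> tgt a = j}"
  shows "(\<Sum>b\<in>same_shape src tgt (c1 @ c2). (\<Prod>t<length (c1 @ c2). g ((c1 @ c2) ! t) (b ! t)) *
            (u (take (length c1) b) * v (drop (length c1) b)))
        = gact src tgt g u c1 * gact src tgt g v c2"
proof -
  let ?S = "same_shape src tgt"
  let ?F = "\<lambda>c b. (\<Prod>t<length c. g (c ! t) (b ! t))"
  have bij: "bij_betw (\<lambda>(b1, b2). b1 @ b2) (?S c1 \<times> ?S c2) (?S (c1 @ c2))"
  proof (rule bij_betw_byWitness[where f' = "\<lambda>b. (take (length c1) b, drop (length c1) b)"])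
    show "\<forall>a\<in>?S c1 \<times> ?S c2. (\<lambda>b. (take (length c1) b, drop (length c1) b)) ((\<lambda>(b1, b2). b1 @ b2) a) = a"
      unfolding same_shape_def by auto
    show "\<forall>a'\<in>?S (c1 @ c2). (\<lambda>(b1, b2). b1 @ b2) ((\<lambda>b. (take (length c1) b, drop (length c1) b)) a') = a'"
      by simp
    show "(\<lambda>(b1, b2). b1 @ b2) ` (?S c1 \<times> ?S c2) \<subseteq> ?S (c1 @ c2)"
    proof (rule image_subsetI)
      fix p assume "p \<in> ?S c1 \<times> ?S c2"
      then obtain b1 b2 where pb: "p = (b1, b2)" and b1: "b1 \<in> ?S c1" and b2: "b2 \<in> ?S c2" by auto
      from b1 b2 have l: "length b1 = length c1" "length b2 = length c2"
        and e1: "\<forall>t<length c1. src (b1 ! t) = src (c1 ! t) \<and> tgt (b1 ! t) = tgt (c1 ! t)"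
        and e2: "\<forall>t<length c2. src (b2 ! t) = src (c2 ! t) \<and> tgt (b2 ! t) = tgt (c2 ! t)"
        unfolding same_shape_def by auto
      have "\<forall>t<length (c1 @ c2). src ((b1 @ b2) ! t) = src ((c1 @ c2) ! t) \<and> tgt ((b1 @ b2) ! t) = tgt ((c1 @ c2) ! t)"
      proof (intro allI impI)
        fix t assume t: "t < length (c1 @ c2)"
        show "src ((b1 @ b2) ! t) = src ((c1 @ c2) ! t) \<and> tgt ((b1 @ b2) ! t) = tgt ((c1 @ c2) ! t)"
        proof (cases "t < length c1")
          case True then show ?thesis using e1 l by (simp add: nth_append)
        next
          case False then show ?thesis using e2 l t by (simp add: nth_append)
        qed
      qed
      then show "(\<lambda>(b1, b2). b1 @ b2) p \<in> ?S (c1 @ c2)" using pb l unfolding same_shape_def by simp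
    qed
    show "(\<lambda>b. (take (length c1) b, drop (length c1) b)) ` ?S (c1 @ c2) \<subseteq> ?S c1 \<times> ?S c2"
    proof (rule image_subsetI)
      fix b assume b: "b \<in> ?S (c1 @ c2)"
      from b have l: "length b = length c1 + length c2"
        and e: "\<forall>t<length (c1 @ c2). src (b ! t) = src ((c1 @ c2) ! t) \<and> tgt (b ! t) = tgt ((c1 @ c2) ! t)"
        unfolding same_shape_def by auto
      have "take (length c1) b \<in> ?S c1" unfolding same_shape_def
      proof (simp add: l, intro allI impI)
        fix t assume t: "t < length c1"
        then show "src (b ! t) = src (c1 ! t) \<and> tgt (b ! t) = tgt (c1 ! t)"
          using e[rule_format, of t] by (simp add: nth_append)
      qed
      moreover have "drop (length c1) b \<in> ?S c2" unfolding same_shape_def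
      proof (simp add: l, intro allI impI)
        fix t assume t: "t < length c2"
        then show "src (b ! (length c1 + t)) = src (c2 ! t) \<and> tgt (b ! (length c1 + t)) = tgt (c2 ! t)"
          using e[rule_format, of "length c1 + t"] by (simp add: nth_append)
      qed
      ultimately show "(take (length c1) b, drop (length c1) b) \<in> ?S c1 \<times> ?S c2" by simp
    qed
  qed
  have "(\<Sum>b\<in>?S (c1 @ c2). ?F (c1 @ c2) b * (u (take (length c1) b) * v (drop (length c1) b)))
     = (\<Sum>p\<in>?S c1 \<times> ?S c2. ?F (c1 @ c2) ((\<lambda>(b1, b2). b1 @ b2) p) *
          (u (take (length c1) ((\<lambda>(b1, b2). b1 @ b2) p)) * v (drop (length c1) ((\<lambda>(b1, b2). b1 @ b2) p))))"
    using sum.reindex_bij_betw[OF bij] by (rule sym)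
  also have "\<dots> = (\<Sum>p\<in>?S c1 \<times> ?S c2. (?F c1 (fst p) * u (fst p)) * (?F c2 (snd p) * v (snd p)))"
  proof (rule sum.cong[OF refl])
    fix p assume p: "p \<in> ?S c1 \<times> ?S c2"
    then obtain b1 b2 where pb: "p = (b1, b2)" and "b1 \<in> ?S c1" "b2 \<in> ?S c2" by auto
    then have l: "length b1 = length c1" "length b2 = length c2" unfolding same_shape_def by auto
    show "?F (c1 @ c2) ((\<lambda>(b1, b2). b1 @ b2) p) *
          (u (take (length c1) ((\<lambda>(b1, b2). b1 @ b2) p)) * v (drop (length c1) ((\<lambda>(b1, b2). b1 @ b2) p)))
       = (?F c1 (fst p) * u (fst p)) * (?F c2 (snd p) * v (snd p))"
      unfolding pb using prod_append[OF l, of g] l by (simp add: ac_simps)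
  qed
  also have "\<dots> = (\<Sum>b1\<in>?S c1. ?F c1 b1 * u b1) * (\<Sum>b2\<in>?S c2. ?F c2 b2 * v b2)"
    by (simp add: sum_product sum.cartesian_product case_prod_beta)
  also have "\<dots> = gact src tgt g u c1 * gact src tgt g v c2" unfolding gact_def by simp
  finally show ?thesis .
qed

lemma gact_tp:
  fixes g :: "'a \<Rightarrow> 'a \<Rightarrow> 'k::field"
  assumes fin: "\<forall>i j. finite {a. src a = i \<and> tgt a = j}"
  shows "gact src tgt g (tp n u v) = tp n (gact src tgt g u) (gact src tgt g v)"
proof
  fix c :: "'a list"
  let ?c1 = "take n c" and ?c2 = "drop n c"
  have "gact src tgt g (tp n u v) c = (\<Sum>b\<in>same_shape src tgt c. (\<Prod>t<length c. g (c ! t) (b ! t)) *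
            (u (take (length ?c1) b) * v (drop (length ?c1) b)))"
    unfolding gact_def tp_def
  proof (rule sum.cong[OF refl])
    fix b assume "b \<in> same_shape src tgt c"
    then have lb: "length b = length c" unfolding same_shape_def by simp
    have "take n b = take (length ?c1) b" "drop n b = drop (length ?c1) b"
      using lb by (auto simp: min_def)
    then show "(\<Prod>t<length c. g (c ! t) (b ! t)) * (u (take n b) * v (drop n b)) =
         (\<Prod>t<length c. g (c ! t) (b ! t)) * (u (take (length ?c1) b) * v (drop (length ?c1) b))"
      by simp
  qed
  also have "\<dots> = gact src tgt g u ?c1 * gact src tgt g v ?c2"
    using gact_tp_aux[OF fin, of g ?c1 ?c2 u v] by simp
  finally show "gact src tgt g (tp n u v) c = tp n (gact src tgt g u) (gact src tgt g v) c"
    unfolding tp_def by simp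
qed


definition psum :: "('b \<Rightarrow> 'k::field) set \<Rightarrow> ('b \<Rightarrow> 'k) set \<Rightarrow> ('b \<Rightarrow> 'k) set" where
  "psum A B = {(\<lambda>x. a x + b x) | a b. a \<in> A \<and> b \<in> B}"

lemma psumI: "a \<in> A \<Longrightarrow> b \<in> B \<Longrightarrow> (\<lambda>x. a x + b x) \<in> psum A B"
  unfolding psum_def by (intro CollectI exI[of _ a] exI[of _ b]) simp

lemma psumE: assumes "f \<in> psum A B" obtains a b where "f = (\<lambda>x. a x + b x)" "a \<in> A" "b \<in> B"
  using assms unfolding psum_def by blast

lemma subsp_psum: assumes A: "subsp A" and B: "subsp B" shows "subsp (psum A B)"
  unfolding subsp_def
proof (intro conjI ballI allI)
  show "(\<lambda>x. 0) \<in> psum A B" using psumI[OF subsp_zero[OF A] subsp_zero[OF B]] by simp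
next
  fix f g assume fS: "f \<in> psum A B" and gS: "g \<in> psum A B"
  obtain a1 b1 where 1: "f = (\<lambda>x. a1 x + b1 x)" "a1 \<in> A" "b1 \<in> B" using fS by (rule psumE)
  obtain a2 b2 where 2: "g = (\<lambda>x. a2 x + b2 x)" "a2 \<in> A" "b2 \<in> B" using gS by (rule psumE)
  have "(\<lambda>x. (a1 x + a2 x) + (b1 x + b2 x)) \<in> psum A B"
    using psumI[OF subsp_add[OF A 1(2) 2(2)] subsp_add[OF B 1(3) 2(3)]] by simp
  then show "(\<lambda>x. f x + g x) \<in> psum A B" unfolding 1(1) 2(1) by (simp add: ac_simps)
next
  fix c f assume fS: "f \<in> psum A B"
  obtain a1 b1 where 1: "f = (\<lambda>x. a1 x + b1 x)" "a1 \<in> A" "b1 \<in> B" using fS by (rule psumE)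
  have "(\<lambda>x. c * a1 x + c * b1 x) \<in> psum A B"
    using psumI[OF subsp_scale[OF A 1(2)] subsp_scale[OF B 1(3)]] by simp
  then show "(\<lambda>x. c * f x) \<in> psum A B" unfolding 1(1) by (simp add: distrib_left)
qed

lemma psum_left: "subsp B \<Longrightarrow> a \<in> A \<Longrightarrow> a \<in> psum A B"
  using psumI[of a A "\<lambda>x. 0" B] subsp_zero[of B] by simp

lemma psum_right: "subsp A \<Longrightarrow> b \<in> B \<Longrightarrow> b \<in> psum A B"
  using psumI[of "\<lambda>x. 0" A b B] subsp_zero[of A] by simp

lemma linop_diff: assumes "linop L" shows "L (\<lambda>x. f x - g x) = (\<lambda>x. L f x - L g x)"
proof -
  have "L (\<lambda>x. f x - g x) = L (\<lambda>x. f x + (\<lambda>x. (-1) * g x) x)" by simp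
  also have "\<dots> = (\<lambda>x. L f x + L (\<lambda>x. (-1) * g x) x)" by (rule linop_add[OF assms])
  also have "\<dots> = (\<lambda>x. L f x - L g x)" using linop_scale[OF assms, of "-1" g] by simp
  finally show ?thesis .
qed

lemma linop_sum: assumes "linop L" shows "L (\<lambda>x. \<Sum>i<(n::nat). f i x) = (\<lambda>x. \<Sum>i<n. L (f i) x)"
proof (induction n)
  case 0 then show ?case using linop_zero[OF assms] by simp
next
  case (Suc n)
  have "L (\<lambda>x. \<Sum>i<Suc n. f i x) = L (\<lambda>x. (\<lambda>x. \<Sum>i<n. f i x) x + f n x)" by simp
  also have "\<dots> = (\<lambda>x. L (\<lambda>x. \<Sum>i<n. f i x) x + L (f n) x)" by (rule linop_add[OF assms])
  finally show ?case using Suc by simp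
qed

lemma linop_id: "linop (\<lambda>f. f)" unfolding linop_def by simp

lemma linop_sl: "linop (sl n z)" unfolding linop_def sl_def by auto

lemma TP_linop: assumes "linop L" "subsp X" "\<forall>a\<in>A. \<forall>b\<in>B. L (tp n a b) \<in> X" "f \<in> TP n A B"
  shows "L f \<in> X"
proof -
  have "\<forall>s\<in>{tp n a b | a b. a \<in> A \<and> b \<in> B}. L s \<in> X" using assms(3) by auto
  from lspan_linop[OF assms(1,2) this] assms(4) show ?thesis unfolding TP_def by simp
qed

lemma tp_assoc: fixes g f b :: "'a list \<Rightarrow> 'k::field" shows "n \<le> K \<Longrightarrow> tp K (tp n g f) b = tp n g (tp (K - n) f b)"
  unfolding tp_def by (rule ext) (simp add: drop_take min_def ac_simps)

lemma sl_tp: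
  fixes a b :: "'a list \<Rightarrow> 'k::field"
  assumes nK: "n \<le> K" and a: "\<forall>x. length x \<noteq> n \<longrightarrow> a x = 0"
  shows "sl K z (tp n a b) = tp n a (sl (K - n) z b)"
proof
  fix x :: "'a list"
  show "sl K z (tp n a b) x = tp n a (sl (K - n) z b) x"
  proof (cases "length x = K")
    case True then show ?thesis using nK unfolding sl_def tp_def by simp
  next
    case False
    show ?thesis
    proof (cases "length x < n")
      case True then show ?thesis using False a unfolding sl_def tp_def by simp
    next
      case False2: False
      then show ?thesis using False nK unfolding sl_def tp_def by auto
    qed
  qed
qed

lemma sl_tp_same:
  fixes a b :: "'a list \<Rightarrow> 'k::field"
  assumes a: "\<forall>x. length x \<noteq> K \<longrightarrow> a x = 0"
  shows "sl K z (tp K a b) = (\<lambda>x. b z * a x)"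
proof
  fix x :: "'a list"
  show "sl K z (tp K a b) x = b z * a x"
    using a unfolding sl_def tp_def by (cases "length x = K") (auto simp: mult.commute)
qed

lemma sl_recover:
  fixes f :: "'a list \<Rightarrow> 'k::field"
  assumes f: "\<forall>x. length x < K \<longrightarrow> f x = 0" and z: "\<forall>z. sl K z f = (\<lambda>x. 0)"
  shows "f = (\<lambda>x. 0)"
proof
  fix x :: "'a list"
  show "f x = 0"
  proof (cases "length x < K")
    case True then show ?thesis using f by simp
  next
    case False
    have "sl K (drop K x) f (take K x) = 0" using z by simp
    then show ?thesis using False unfolding sl_def by simp
  qed
qed

lemma pspace_vanish: "f \<in> pspace src tgt ws \<Longrightarrow> length ws = Suc n \<Longrightarrow> \<forall>x. length x \<noteq> n \<longrightarrow> f x = 0"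
  using pspace_len by fastforce

lemma sum_skip:
  fixes k :: nat
  assumes "k < Suc n"
  shows "(\<Sum>i<Suc n. f i) = f k + (\<Sum>i<n. f (if i < k then i else Suc i))"
proof -
  let ?sk = "\<lambda>i::nat. if i < k then i else Suc i"
  have inj: "inj_on ?sk {..<n}" unfolding inj_on_def by auto
  have img: "?sk ` {..<n} = {..<Suc n} - {k}"
  proof
    show "?sk ` {..<n} \<subseteq> {..<Suc n} - {k}" by auto
    show "{..<Suc n} - {k} \<subseteq> ?sk ` {..<n}"
    proof
      fix j assume j: "j \<in> {..<Suc n} - {k}"
      show "j \<in> ?sk ` {..<n}"
      proof (cases "j < k")
        case True then show ?thesis using j assms by (intro image_eqI[of _ _ j]) auto
      next
        case False then have "j = ?sk (j - 1)" "j - 1 < n" using j by auto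
        then show ?thesis by blast
      qed
    qed
  qed
  have "(\<Sum>i<Suc n. f i) = f k + sum f ({..<Suc n} - {k})"
    by (rule sum.remove) (use assms in auto)
  also have "sum f ({..<Suc n} - {k}) = (\<Sum>i<n. f (?sk i))"
    using sum.reindex[OF inj, of f] img by simp
  finally show ?thesis .
qed

lemma choice_pairs:
  assumes "\<forall>i<(n::nat). \<exists>a b. P i a b"
  obtains r b where "\<forall>i<n. P i (r i) (b i)"
proof -
  have "\<forall>i. \<exists>ab. i < n \<longrightarrow> P i (fst ab) (snd ab)" using assms by auto
  then obtain f where "\<forall>i. i < n \<longrightarrow> P i (fst (f i)) (snd (f i))" by (metis choice)
  then show ?thesis using that[of "\<lambda>i. fst (f i)" "\<lambda>i. snd (f i)"] by auto
qed

lemma TP_repr: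
  assumes "U \<in> TP K R B" "subsp B"
  obtains n r b where "U = (\<lambda>x. \<Sum>i<(n::nat). tp K (r i) (b i) x)" "\<forall>i<n. r i \<in> R \<and> b i \<in> B"
proof -
  obtain n c fs where U: "U = (\<lambda>x. \<Sum>i<(n::nat). c i * fs i x)" and fs: "\<forall>i<n. fs i \<in> {tp K a b | a b. a \<in> R \<and> b \<in> B}"
    using assms(1) unfolding TP_def by (rule lspanE)
  from fs have "\<forall>i<n. \<exists>a b. fs i = tp K a b \<and> a \<in> R \<and> b \<in> B" by blast
  then obtain r b where rb: "\<forall>i<n. fs i = tp K (r i) (b i) \<and> r i \<in> R \<and> b i \<in> B" by (rule choice_pairs)
  have "U = (\<lambda>x. \<Sum>i<n. tp K (r i) (\<lambda>y. c i * b i y) x)"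
    unfolding U by (rule ext, rule sum.cong[OF refl]) (use rb in \<open>simp add: tp_def ac_simps\<close>)
  moreover have "\<forall>i<n. r i \<in> R \<and> (\<lambda>y. c i * b i y) \<in> B" using rb subsp_scale[OF assms(2)] by auto
  ultimately show ?thesis by (rule that)
qed


definition Wk :: "('a \<Rightarrow> 'v) \<Rightarrow> ('a \<Rightarrow> 'v) \<Rightarrow> ('a \<Rightarrow> 'a \<Rightarrow> 'k::field) set \<Rightarrow> 'v list \<Rightarrow> nat \<Rightarrow> ('a list \<Rightarrow> 'k) set" where
  "Wk src tgt G vs K = lspan (\<Union>n\<in>{1..<K}. TP n (invariants src tgt G (take (Suc n) vs)) (pspace src tgt (drop n vs)))"

definition uu :: "nat \<Rightarrow> nat \<Rightarrow> (nat \<Rightarrow> 'a list \<Rightarrow> 'k::field) \<Rightarrow> (nat \<Rightarrow> 'a list \<Rightarrow> 'k) \<Rightarrow> 'a list \<Rightarrow> 'k" where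
  "uu K n r b = (\<lambda>x. \<Sum>i<n. tp K (r i) (b i) x)"

lemma seg_0: "seg vs 0 n = take (Suc n) vs" by (simp add: seg_def)
lemma seg_last: "n < length vs \<Longrightarrow> seg vs n (length vs - 1 - n) = drop n vs" by (simp add: seg_def)
lemma seg_take: "s + n \<le> K \<Longrightarrow> seg (take (Suc K) vs) s n = seg vs s n"
  by (simp add: seg_def drop_take take_take min_def)
lemma seg_drop: "seg (drop k vs) s n = seg vs (k + s) n" by (simp add: seg_def add.commute)

lemma tprodl2:
  fixes f g :: "'a list \<Rightarrow> 'k::field"
  assumes f: "f \<in> pspace src tgt ws" and l: "length ws = Suc k"
  shows "tprodl [n, k] [g, f] = tp n g f"
proof
  fix x :: "'a list"
  show "tprodl [n, k] [g, f] x = tp n g f x"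
  proof (cases "length x \<le> n + k")
    case True then show ?thesis unfolding tp_def by simp
  next
    case False
    then have "f (drop n x) = 0" using pspace_len[OF f, of "drop n x"] l by simp
    then show ?thesis using False unfolding tp_def by simp
  qed
qed

lemma tprodl1:
  fixes f :: "'a list \<Rightarrow> 'k::field"
  assumes f: "f \<in> pspace src tgt ws" and l: "length ws = Suc m"
  shows "tprodl [m] [f] = f"
proof
  fix x :: "'a list"
  show "tprodl [m] [f] x = f x"
  proof (cases "length x \<le> m")
    case True then show ?thesis by simp
  next
    case False
    then have "f x = 0" using pspace_len[OF f, of x] l by simp
    then show ?thesis using False by simp
  qed
qed

locale qctx =
  fixes src tgt :: "'a \<Rightarrow> 'v" and G :: "('a \<Rightarrow> 'a \<Rightarrow> 'k::field) set"
    and irr :: "'v list \<Rightarrow> ('a list \<Rightarrow> 'k) set"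
  assumes fin: "\<forall>i j. finite {a. src a = i \<and> tgt a = j}"
begin

abbreviation PS :: "'v list \<Rightarrow> ('a list \<Rightarrow> 'k) set" where "PS \<equiv> pspace src tgt"
abbreviation IV :: "'v list \<Rightarrow> ('a list \<Rightarrow> 'k) set" where "IV \<equiv> invariants src tgt G"
abbreviation CP :: "'v list \<Rightarrow> ('a list \<Rightarrow> 'k) set" where "CP \<equiv> composite src tgt G"
abbreviation W :: "'v list \<Rightarrow> nat \<Rightarrow> ('a list \<Rightarrow> 'k) set" where "W \<equiv> Wk src tgt G"
abbreviation GA where "GA \<equiv> gact src tgt"

lemma IV_iff: "f \<in> IV ws \<longleftrightarrow> f \<in> PS ws \<and> (\<forall>g\<in>G. GA g f = f)"
  by (simp add: invariants_def)

lemma IV_P: "f \<in> IV ws \<Longrightarrow> f \<in> PS ws" by (simp add: IV_iff)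
lemma IV_fix: "f \<in> IV ws \<Longrightarrow> g \<in> G \<Longrightarrow> GA g f = f" by (simp add: IV_iff)

lemma subsp_IV: "subsp (IV ws)"
  unfolding subsp_def
proof (intro conjI ballI allI)
  show "(\<lambda>x. 0) \<in> IV ws" unfolding IV_iff
    by (intro conjI ballI subsp_zero[OF subsp_pspace] linop_zero[OF linop_gact])
next
  fix f h assume f: "f \<in> IV ws" and h: "h \<in> IV ws"
  have "\<forall>g\<in>G. GA g (\<lambda>x. f x + h x) = (\<lambda>x. f x + h x)"
  proof
    fix g assume g: "g \<in> G"
    have "GA g (\<lambda>x. f x + h x) = (\<lambda>x. GA g f x + GA g h x)" by (rule linop_add[OF linop_gact])
    then show "GA g (\<lambda>x. f x + h x) = (\<lambda>x. f x + h x)" using IV_fix[OF f g] IV_fix[OF h g] by simp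
  qed
  then show "(\<lambda>x. f x + h x) \<in> IV ws" unfolding IV_iff
    using subsp_add[OF subsp_pspace IV_P[OF f] IV_P[OF h]] by simp
next
  fix c f assume f: "f \<in> IV ws"
  have "\<forall>g\<in>G. GA g (\<lambda>x. c * f x) = (\<lambda>x. c * f x)"
  proof
    fix g assume g: "g \<in> G"
    have "GA g (\<lambda>x. c * f x) = (\<lambda>x. c * GA g f x)" by (rule linop_scale[OF linop_gact])
    then show "GA g (\<lambda>x. c * f x) = (\<lambda>x. c * f x)" using IV_fix[OF f g] by simp
  qed
  then show "(\<lambda>x. c * f x) \<in> IV ws" unfolding IV_iff
    using subsp_scale[OF subsp_pspace IV_P[OF f]] by simp
qed

lemma IV_tp:
  assumes k: "k < length ws" and a: "a \<in> IV (take (Suc k) ws)" and b: "b \<in> IV (drop k ws)"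
  shows "tp k a b \<in> IV ws"
  unfolding IV_iff
proof (intro conjI ballI)
  show "tp k a b \<in> PS ws" by (rule pspace_tp[OF k IV_P[OF a] IV_P[OF b]])
  fix g assume g: "g \<in> G"
  have "GA g (tp k a b) = tp k (GA g a) (GA g b)" by (rule gact_tp[OF fin])
  then show "GA g (tp k a b) = tp k a b" using IV_fix[OF a g] IV_fix[OF b g] by simp
qed

lemma comp_gens:
  "CP ws = lspan (\<Union>n\<in>{1..<length ws - 1}. {tp n g f |g f. g \<in> IV (take (Suc n) ws) \<and> f \<in> IV (drop n ws)})"
proof -
  have "\<And>n. n \<in> {1..<length ws - 1} \<Longrightarrow>
     {tprodl [n, length ws - 1 - n] [g, f] |g f. g \<in> IV (seg ws 0 n) \<and> f \<in> IV (seg ws n (length ws - 1 - n))}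
     = {tp n g f |g f. g \<in> IV (take (Suc n) ws) \<and> f \<in> IV (drop n ws)}"
  proof -
    fix n assume n: "n \<in> {1..<length ws - 1}"
    then have nl: "n < length ws" by auto
    have l: "length (drop n ws) = Suc (length ws - 1 - n)" using n by auto
    have eq: "\<And>g f. f \<in> IV (drop n ws) \<Longrightarrow> tprodl [n, length ws - 1 - n] [g, f] = tp n g f"
      using tprodl2[OF IV_P l] by blast
    show "{tprodl [n, length ws - 1 - n] [g, f] |g f. g \<in> IV (seg ws 0 n) \<and> f \<in> IV (seg ws n (length ws - 1 - n))}
     = {tp n g f |g f. g \<in> IV (take (Suc n) ws) \<and> f \<in> IV (drop n ws)}"
      unfolding seg_0 seg_last[OF nl]
    proof (intro set_eqI iffI)
      fix x assume "x \<in> {tprodl [n, length ws - 1 - n] [g, f] |g f. g \<in> IV (take (Suc n) ws) \<and> f \<in> IV (drop n ws)}"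
      then obtain g f where gf: "x = tprodl [n, length ws - 1 - n] [g, f]" "g \<in> IV (take (Suc n) ws)" "f \<in> IV (drop n ws)"
        by blast
      then have "x = tp n g f" using eq by simp
      then show "x \<in> {tp n g f |g f. g \<in> IV (take (Suc n) ws) \<and> f \<in> IV (drop n ws)}" using gf by blast
    next
      fix x assume "x \<in> {tp n g f |g f. g \<in> IV (take (Suc n) ws) \<and> f \<in> IV (drop n ws)}"
      then obtain g f where gf: "x = tp n g f" "g \<in> IV (take (Suc n) ws)" "f \<in> IV (drop n ws)"
        by blast
      then have "x = tprodl [n, length ws - 1 - n] [g, f]" using eq by simp
      then show "x \<in> {tprodl [n, length ws - 1 - n] [g, f] |g f. g \<in> IV (take (Suc n) ws) \<and> f \<in> IV (drop n ws)}"
        using gf by blast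
    qed
  qed
  then show ?thesis unfolding composite_def by (metis (no_types, lifting) SUP_cong)
qed

lemma subsp_CP: "subsp (CP ws)" unfolding comp_gens by (rule subsp_lspan)

lemma comp_linop:
  assumes L: "linop L" and X: "subsp X"
    and gen: "\<forall>n\<in>{1..<length ws - 1}. \<forall>g\<in>IV (take (Suc n) ws). \<forall>f\<in>IV (drop n ws). L (tp n g f) \<in> X"
    and c: "c \<in> CP ws"
  shows "L c \<in> X"
proof -
  have "\<forall>s\<in>(\<Union>n\<in>{1..<length ws - 1}. {tp n g f |g f. g \<in> IV (take (Suc n) ws) \<and> f \<in> IV (drop n ws)}). L s \<in> X"
  proof
    fix s assume "s \<in> (\<Union>n\<in>{1..<length ws - 1}. {tp n g f |g f. g \<in> IV (take (Suc n) ws) \<and> f \<in> IV (drop n ws)})"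
    then obtain n g f where "n \<in> {1..<length ws - 1}" "s = tp n g f" "g \<in> IV (take (Suc n) ws)" "f \<in> IV (drop n ws)"
      by blast
    then show "L s \<in> X" using gen by simp
  qed
  from lspan_linop[OF L X this] c show ?thesis unfolding comp_gens by simp
qed

lemma comp_gen:
  assumes "n \<in> {1..<length ws - 1}" "g \<in> IV (take (Suc n) ws)" "f \<in> IV (drop n ws)"
  shows "tp n g f \<in> CP ws"
proof -
  have "tp n g f \<in> (\<Union>n\<in>{1..<length ws - 1}. {tp n g f |g f. g \<in> IV (take (Suc n) ws) \<and> f \<in> IV (drop n ws)})"
    by (rule UN_I[OF assms(1)], intro CollectI exI[of _ g] exI[of _ f]) (simp add: assms)
  then show ?thesis unfolding comp_gens using lspan_sub by (rule subsetD[rotated])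
qed

lemma CP_IV: assumes c: "c \<in> CP ws" shows "c \<in> IV ws"
proof -
  have "\<forall>n\<in>{1..<length ws - 1}. \<forall>g\<in>IV (take (Suc n) ws). \<forall>f\<in>IV (drop n ws). (\<lambda>f. f) (tp n g f) \<in> IV ws"
    using IV_tp by auto
  from comp_linop[OF linop_id subsp_IV this c] show ?thesis by simp
qed

lemma subsp_W: "subsp (W vs K)" unfolding Wk_def by (rule subsp_lspan)

lemma W_linop:
  assumes L: "linop L" and X: "subsp X"
    and gen: "\<forall>n\<in>{1..<K}. \<forall>a\<in>IV (take (Suc n) vs). \<forall>b\<in>PS (drop n vs). L (tp n a b) \<in> X"
    and f: "f \<in> W vs K"
  shows "L f \<in> X"
proof -
  have "\<forall>s\<in>(\<Union>n\<in>{1..<K}. TP n (IV (take (Suc n) vs)) (PS (drop n vs))). L s \<in> X"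
  proof
    fix s assume "s \<in> (\<Union>n\<in>{1..<K}. TP n (IV (take (Suc n) vs)) (PS (drop n vs)))"
    then obtain n where n: "n \<in> {1..<K}" and s: "s \<in> TP n (IV (take (Suc n) vs)) (PS (drop n vs))" by blast
    show "L s \<in> X" using TP_linop[OF L X _ s] gen n by blast
  qed
  from lspan_linop[OF L X this] f show ?thesis unfolding Wk_def by simp
qed

lemma W_gen: "n \<in> {1..<K} \<Longrightarrow> a \<in> IV (take (Suc n) vs) \<Longrightarrow> b \<in> PS (drop n vs) \<Longrightarrow> tp n a b \<in> W vs K"
proof -
  assume n: "n \<in> {1..<K}" and a: "a \<in> IV (take (Suc n) vs)" and b: "b \<in> PS (drop n vs)"
  have "tp n a b \<in> (\<Union>n\<in>{1..<K}. TP n (IV (take (Suc n) vs)) (PS (drop n vs)))"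
    by (rule UN_I[OF n], rule TP_gen[OF a b])
  then show ?thesis unfolding Wk_def using lspan_sub by (rule subsetD[rotated])
qed

lemma W_TP: assumes n: "n \<in> {1..<K}" and f: "f \<in> TP n (IV (take (Suc n) vs)) (PS (drop n vs))" shows "f \<in> W vs K"
proof -
  have "\<forall>a\<in>IV (take (Suc n) vs). \<forall>b\<in>PS (drop n vs). (\<lambda>f. f) (tp n a b) \<in> W vs K"
    using W_gen[OF n] by auto
  from TP_linop[OF linop_id subsp_W this f] show ?thesis by simp
qed

lemma W_empty: assumes "K \<le> 1" "subsp X" "f \<in> W vs K" shows "f \<in> X"
proof -
  have "\<forall>n\<in>{1..<K}. \<forall>a\<in>IV (take (Suc n) vs). \<forall>b\<in>PS (drop n vs). (\<lambda>f. f) (tp n a b) \<in> X"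
    using assms(1) by auto
  from W_linop[OF linop_id assms(2) this assms(3)] show ?thesis by simp
qed

lemma W_step:
  assumes "1 \<le> K" "f \<in> W vs (Suc K)"
  shows "f \<in> psum (W vs K) (TP K (IV (take (Suc K) vs)) (PS (drop K vs)))"
proof -
  have "\<forall>n\<in>{1..<Suc K}. \<forall>a\<in>IV (take (Suc n) vs). \<forall>b\<in>PS (drop n vs).
        tp n a b \<in> psum (W vs K) (TP K (IV (take (Suc K) vs)) (PS (drop K vs)))"
  proof (intro ballI)
    fix n a b assume n: "n \<in> {1..<Suc K}" and a: "a \<in> IV (take (Suc n) vs)" and b: "b \<in> PS (drop n vs)"
    show "tp n a b \<in> psum (W vs K) (TP K (IV (take (Suc K) vs)) (PS (drop K vs)))"
    proof (cases "n = K")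
      case True then show ?thesis using psum_right[OF subsp_W TP_gen[OF a b]] by simp
    next
      case False
      then have "n \<in> {1..<K}" using n by auto
      then show ?thesis using psum_left[OF subsp_TP W_gen[OF _ a b]] by blast
    qed
  qed
  from W_linop[OF linop_id subsp_psum[OF subsp_W subsp_TP] this assms(2)] show ?thesis by simp
qed

lemma W_G: "g \<in> G \<Longrightarrow> f \<in> W vs K \<Longrightarrow> GA g f \<in> W vs K"
proof -
  assume g: "g \<in> G" and f: "f \<in> W vs K"
  have "\<forall>n\<in>{1..<K}. \<forall>a\<in>IV (take (Suc n) vs). \<forall>b\<in>PS (drop n vs). GA g (tp n a b) \<in> W vs K"
  proof (intro ballI)
    fix n a b assume n: "n \<in> {1..<K}" and a: "a \<in> IV (take (Suc n) vs)" and b: "b \<in> PS (drop n vs)"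
    have "GA g (tp n a b) = tp n (GA g a) (GA g b)" by (rule gact_tp[OF fin])
    then have "GA g (tp n a b) = tp n a (GA g b)" using IV_fix[OF a g] by simp
    then show "GA g (tp n a b) \<in> W vs K" using W_gen[OF n a gact_pspace[OF b]] by simp
  qed
  from W_linop[OF linop_gact subsp_W this f] show ?thesis .
qed

lemma W_sl:
  assumes K: "K < length vs" and f: "f \<in> W vs K"
  shows "sl K z f \<in> W (take (Suc K) vs) K"
proof -
  have "\<forall>n\<in>{1..<K}. \<forall>a\<in>IV (take (Suc n) vs). \<forall>b\<in>PS (drop n vs). sl K z (tp n a b) \<in> W (take (Suc K) vs) K"
  proof (intro ballI)
    fix n a b assume n: "n \<in> {1..<K}" and a: "a \<in> IV (take (Suc n) vs)" and b: "b \<in> PS (drop n vs)"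
    have ln: "length (take (Suc n) vs) = Suc n" using n K by auto
    have av: "\<forall>x. length x \<noteq> n \<longrightarrow> a x = 0" using pspace_vanish[OF IV_P[OF a] ln] .
    have e: "sl K z (tp n a b) = tp n a (sl (K - n) z b)" using sl_tp[OF _ av] n by simp
    have a': "a \<in> IV (take (Suc n) (take (Suc K) vs))" using a n by (simp add: min_def)
    have "drop n (take (Suc K) vs) = take (Suc (K - n)) (drop n vs)" using n by (simp add: drop_take Suc_diff_le)
    then have b': "sl (K - n) z b \<in> PS (drop n (take (Suc K) vs))" using pspace_sl[OF b] by simp
    show "sl K z (tp n a b) \<in> W (take (Suc K) vs) K" unfolding e by (rule W_gen[OF n a' b'])
  qed
  from W_linop[OF linop_sl subsp_W this f] show ?thesis .
qed

lemma W_PS: "K < length vs \<Longrightarrow> f \<in> W vs K \<Longrightarrow> f \<in> PS vs"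
proof -
  assume K: "K < length vs" and f: "f \<in> W vs K"
  have "\<forall>n\<in>{1..<K}. \<forall>a\<in>IV (take (Suc n) vs). \<forall>b\<in>PS (drop n vs). tp n a b \<in> PS vs"
  proof (intro ballI)
    fix n a b assume n: "n \<in> {1..<K}" and a: "a \<in> IV (take (Suc n) vs)" and b: "b \<in> PS (drop n vs)"
    have "n < length vs" using n K by auto
    from pspace_tp[OF this IV_P[OF a] b] show "tp n a b \<in> PS vs" .
  qed
  from W_linop[OF linop_id subsp_pspace this f] show ?thesis by simp
qed

lemma CW:
  assumes K: "K < length vs" and k: "k \<in> CP (take (Suc K) vs)" and b: "b \<in> PS (drop K vs)"
  shows "tp K k b \<in> W vs K"
proof -
  have "\<forall>n\<in>{1..<length (take (Suc K) vs) - 1}. \<forall>g\<in>IV (take (Suc n) (take (Suc K) vs)).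
         \<forall>f\<in>IV (drop n (take (Suc K) vs)). tp K (tp n g f) b \<in> W vs K"
  proof (intro ballI)
    fix n g f assume n: "n \<in> {1..<length (take (Suc K) vs) - 1}"
      and g: "g \<in> IV (take (Suc n) (take (Suc K) vs))" and f: "f \<in> IV (drop n (take (Suc K) vs))"
    have nK: "n \<in> {1..<K}" using n K by auto
    have e: "tp K (tp n g f) b = tp n g (tp (K - n) f b)" using nK by (simp add: tp_assoc)
    have g': "g \<in> IV (take (Suc n) vs)" using g nK by (simp add: min_def)
    have "drop n (take (Suc K) vs) = take (Suc (K - n)) (drop n vs)" using nK by (simp add: drop_take Suc_diff_le)
    then have f': "f \<in> PS (take (Suc (K - n)) (drop n vs))" using IV_P[OF f] by simp
    have b': "b \<in> PS (drop (K - n) (drop n vs))" using b nK by simp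
    have "K - n < length (drop n vs)" using nK K by auto
    from pspace_tp[OF this f' b'] have "tp (K - n) f b \<in> PS (drop n vs)" .
    then show "tp K (tp n g f) b \<in> W vs K" unfolding e by (rule W_gen[OF nK g'])
  qed
  from comp_linop[OF linop_tp_left subsp_W this k] show ?thesis .
qed

end


context qctx
begin

abbreviation Hyp :: "'v list \<Rightarrow> bool" where
  "Hyp vs \<equiv> \<forall>s n. 1 \<le> n \<and> s + n < length vs \<longrightarrow> is_irr_space src tgt G (seg vs s n) (irr (seg vs s n))"

abbreviation Qp :: "'v list \<Rightarrow> bool" where
  "Qp vs \<equiv> \<forall>y\<in>irr vs. y \<in> W vs (length vs - 1) \<longrightarrow> y = (\<lambda>x. 0)"

lemma irr_props:
  assumes "is_irr_space src tgt G w (irr w)"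
  shows "subsp (irr w)" "irr w \<subseteq> IV w" "\<forall>f\<in>irr w. f \<in> CP w \<longrightarrow> f = (\<lambda>x. 0)"
    "\<forall>h\<in>IV w. \<exists>f\<in>irr w. \<exists>c\<in>CP w. h = (\<lambda>x. f x + c x)"
  using assms unfolding is_irr_space_def by auto

lemma Hyp_take: assumes "Hyp vs" shows "Hyp (take (Suc K) vs)"
proof (intro allI impI)
  fix s n assume sn: "1 \<le> n \<and> s + n < length (take (Suc K) vs)"
  then have "s + n \<le> K" "s + n < length vs" by auto
  then show "is_irr_space src tgt G (seg (take (Suc K) vs) s n) (irr (seg (take (Suc K) vs) s n))"
    using assms sn seg_take by metis
qed

lemma Hyp_drop: assumes "Hyp vs" shows "Hyp (drop k vs)"
proof (intro allI impI)
  fix s n assume sn: "1 \<le> n \<and> s + n < length (drop k vs)"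
  then have "k + s + n < length vs" by auto
  then show "is_irr_space src tgt G (seg (drop k vs) s n) (irr (seg (drop k vs) s n))"
    using assms sn unfolding seg_drop by (metis add.assoc)
qed

lemma Hyp_prefix: assumes "Hyp vs" "1 \<le> K" "K < length vs"
  shows "is_irr_space src tgt G (take (Suc K) vs) (irr (take (Suc K) vs))"
  using assms(1)[rule_format, of K 0] assms(2,3) by (simp add: seg_0)

lemma Hyp_self: assumes "Hyp vs" "2 \<le> length vs"
  shows "is_irr_space src tgt G vs (irr vs)"
  using Hyp_prefix[OF assms(1), of "length vs - 1"] assms(2) by simp

lemma L1:
  assumes K: "1 \<le> K" "K < length vs" and Q: "Qp (take (Suc K) vs)"
    and irrK: "is_irr_space src tgt G (take (Suc K) vs) (irr (take (Suc K) vs))"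
  shows "\<forall>r b. (\<forall>i<n. r i \<in> irr (take (Suc K) vs) \<and> b i \<in> PS (drop K vs)) \<longrightarrow>
     (\<forall>g\<in>G. (\<lambda>x. GA g (uu K n r b) x - uu K n r b x) \<in> W vs K) \<longrightarrow>
     uu K n r b \<in> TP K (irr (take (Suc K) vs)) (IV (drop K vs))"
proof (induction n rule: less_induct)
  case (less n)
  let ?R = "irr (take (Suc K) vs)"
  have Rsub: "subsp ?R" and RI: "?R \<subseteq> IV (take (Suc K) vs)" using irr_props[OF irrK] by auto
  have lK: "length (take (Suc K) vs) = Suc K" using K by auto
  show ?case
  proof (intro allI impI)
    fix r b assume rb: "\<forall>i<n. r i \<in> ?R \<and> b i \<in> PS (drop K vs)"
      and gU: "\<forall>g\<in>G. (\<lambda>x. GA g (uu K n r b) x - uu K n r b x) \<in> W vs K"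
    have rvan: "\<forall>i<n. \<forall>x. length x \<noteq> K \<longrightarrow> r i x = 0"
    proof (intro allI impI)
      fix i and x :: "'a list" assume i: "i < n" and x: "length x \<noteq> K"
      have "r i \<in> PS (take (Suc K) vs)" using rb i RI IV_P by blast
      from pspace_vanish[OF this lK] x show "r i x = 0" by simp
    qed
    show "uu K n r b \<in> TP K ?R (IV (drop K vs))"
    proof (cases "\<forall>c. (\<lambda>x. \<Sum>i<n. c i * r i x) = (\<lambda>x. 0) \<longrightarrow> (\<forall>i<n. c i = 0)")
      case True
      have binv: "\<forall>i<n. b i \<in> IV (drop K vs)"
      proof (intro allI impI)
        fix i assume i: "i < n"
        have "\<forall>g\<in>G. GA g (b i) = b i"
        proof
          fix g assume g: "g \<in> G"
          have gUe: "GA g (uu K n r b) = (\<lambda>x. \<Sum>j<n. tp K (r j) (GA g (b j)) x)"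
          proof -
            have "GA g (uu K n r b) = (\<lambda>x. \<Sum>j<n. GA g (tp K (r j) (b j)) x)"
              unfolding uu_def by (rule linop_sum[OF linop_gact])
            also have "\<dots> = (\<lambda>x. \<Sum>j<n. tp K (r j) (GA g (b j)) x)"
            proof (rule ext, rule sum.cong[OF refl])
              fix x :: "'a list" and j assume j: "j \<in> {..<n}"
              have "GA g (tp K (r j) (b j)) = tp K (GA g (r j)) (GA g (b j))" by (rule gact_tp[OF fin])
              also have "GA g (r j) = r j" using IV_fix[of "r j" "take (Suc K) vs" g] rb RI j g by auto
              finally show "GA g (tp K (r j) (b j)) x = tp K (r j) (GA g (b j)) x" by simp
            qed
            finally show ?thesis .
          qed
          show "GA g (b i) = b i"
          proof
            fix z :: "'a list"
            define d where "d j = GA g (b j) z - b j z" for j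
            have slD: "sl K z (\<lambda>x. GA g (uu K n r b) x - uu K n r b x) = (\<lambda>x. \<Sum>j<n. d j * r j x)"
            proof
              fix x :: "'a list"
              show "sl K z (\<lambda>x. GA g (uu K n r b) x - uu K n r b x) x = (\<Sum>j<n. d j * r j x)"
              proof (cases "length x = K")
                case True
                have "sl K z (\<lambda>x. GA g (uu K n r b) x - uu K n r b x) x
                   = (\<Sum>j<n. tp K (r j) (GA g (b j)) (x @ z)) - uu K n r b (x @ z)"
                  using True unfolding sl_def gUe by simp
                also have "\<dots> = (\<Sum>j<n. d j * r j x)"
                  using True unfolding uu_def tp_def d_def by (simp add: sum_subtractf algebra_simps)
                finally show ?thesis .
              next
                case False
                then have "\<forall>j\<in>{..<n}. d j * r j x = 0" using rvan by auto
                then have "(\<Sum>j<n. d j * r j x) = 0" by (intro sum.neutral) simp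
                then show ?thesis using False unfolding sl_def by simp
              qed
            qed
            have inR: "(\<lambda>x. \<Sum>j<n. d j * r j x) \<in> ?R"
              by (rule subsp_sum[OF Rsub]) (use rb in auto)
            have inW: "sl K z (\<lambda>x. GA g (uu K n r b) x - uu K n r b x) \<in> W (take (Suc K) vs) K"
              by (rule W_sl[OF K(2) gU[rule_format, OF g]])
            have "(\<lambda>x. \<Sum>j<n. d j * r j x) = (\<lambda>x. 0)"
              using Q inR inW slD lK by simp
            then have "\<forall>j<n. d j = 0" using True by blast
            then show "GA g (b i) z = b i z" using i unfolding d_def by simp
          qed
        qed
        then show "b i \<in> IV (drop K vs)" using rb i IV_iff by auto
      qed
      have "(\<lambda>x. \<Sum>i<n. (\<lambda>_. 1) i * tp K (r i) (b i) x) \<in> TP K ?R (IV (drop K vs))"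
        by (rule subsp_sum[OF subsp_TP]) (use rb binv in \<open>auto intro!: TP_gen\<close>)
      then show ?thesis unfolding uu_def by simp
    next
      case False
      then obtain c k where c: "(\<lambda>x. \<Sum>i<n. c i * r i x) = (\<lambda>x. 0)" and k: "k < n" "c k \<noteq> 0" by blast
      then obtain n' where n': "n = Suc n'" by (cases n) auto
      define sk where "sk i = (if i < k then i else Suc i)" for i
      define r' where "r' i = r (sk i)" for i
      define b' where "b' i = (\<lambda>y. b (sk i) y - (c (sk i) / c k) * b k y)" for i
      have skn: "\<forall>i<n'. sk i < n" using n' unfolding sk_def by auto
      have eqU: "uu K n r b = uu K n' r' b'"
      proof
        fix x :: "'a list"
        define x1 where "x1 = take K x"
        define x2 where "x2 = drop K x"
        have e: "(\<Sum>i<n. c i * r i x1) = 0" using fun_cong[OF c, of x1] by simp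
        have s1: "(\<Sum>i<n. r i x1 * b i x2) = r k x1 * b k x2 + (\<Sum>i<n'. r (sk i) x1 * b (sk i) x2)"
          using sum_skip[of k n' "\<lambda>i. r i x1 * b i x2"] k n' unfolding sk_def by simp
        have s2: "c k * r k x1 + (\<Sum>i<n'. c (sk i) * r (sk i) x1) = 0"
          using sum_skip[of k n' "\<lambda>i. c i * r i x1"] k n' e unfolding sk_def by simp
        have s3: "(\<Sum>i<n'. r (sk i) x1 * (b (sk i) x2 - c (sk i) / c k * b k x2)) =
            (\<Sum>i<n'. r (sk i) x1 * b (sk i) x2) - (b k x2 / c k) * (\<Sum>i<n'. c (sk i) * r (sk i) x1)"
          by (simp add: sum_subtractf sum_distrib_left right_diff_distrib ac_simps)
        have s4: "(\<Sum>i<n'. c (sk i) * r (sk i) x1) = - (c k * r k x1)" using s2 by (simp add: eq_neg_iff_add_eq_0 add.commute)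
        have s5: "(b k x2 / c k) * (c k * r k x1) = r k x1 * b k x2" using k(2) by simp
        have "uu K n r b x = r k x1 * b k x2 + (\<Sum>i<n'. r (sk i) x1 * b (sk i) x2)"
          unfolding uu_def tp_def x1_def[symmetric] x2_def[symmetric] by (rule s1)
        moreover have "uu K n' r' b' x = (\<Sum>i<n'. r (sk i) x1 * b (sk i) x2) + r k x1 * b k x2"
          unfolding uu_def tp_def x1_def[symmetric] x2_def[symmetric] r'_def b'_def s3 s4 s5[symmetric]
          by simp
        ultimately show "uu K n r b x = uu K n' r' b' x" by simp
      qed
      have rb': "\<forall>i<n'. r' i \<in> ?R \<and> b' i \<in> PS (drop K vs)"
      proof (intro allI impI conjI)
        fix i assume i: "i < n'"
        then have "sk i < n" using skn by simp
        then show "r' i \<in> ?R" unfolding r'_def using rb by auto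
        have h1: "b (sk i) \<in> PS (drop K vs)" using rb \<open>sk i < n\<close> by auto
        have "b k \<in> PS (drop K vs)" using rb k by auto
        then have h2: "(\<lambda>y. (c (sk i) / c k) * b k y) \<in> PS (drop K vs)" by (rule subsp_scale[OF subsp_pspace])
        show "b' i \<in> PS (drop K vs)" unfolding b'_def by (rule subsp_diff[OF subsp_pspace h1 h2])
      qed
      have gU': "\<forall>g\<in>G. (\<lambda>x. GA g (uu K n' r' b') x - uu K n' r' b' x) \<in> W vs K"
        using gU unfolding eqU .
      have "n' < n" using n' by simp
      have ih: "\<forall>r b. (\<forall>i<n'. r i \<in> ?R \<and> b i \<in> PS (drop K vs)) \<longrightarrow>
         (\<forall>g\<in>G. (\<lambda>x. GA g (uu K n' r b) x - uu K n' r b x) \<in> W vs K) \<longrightarrow>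
         uu K n' r b \<in> TP K ?R (IV (drop K vs))" by (rule less.IH[OF \<open>n' < n\<close>])
      have "uu K n' r' b' \<in> TP K ?R (IV (drop K vs))"
        by (rule mp[OF mp[OF ih[THEN spec[of _ r'], THEN spec[of _ b']] rb'] gU'])
      then show ?thesis unfolding eqU .
    qed
  qed
qed

end


context qctx
begin

lemma Pm:
  assumes len: "2 \<le> length vs" and Hv: "Hyp vs"
    and Qpre: "\<forall>K. 1 \<le> K \<longrightarrow> K < length vs - 1 \<longrightarrow> Qp (take (Suc K) vs)"
  shows "K \<le> length vs - 1 \<Longrightarrow> y \<in> IV vs \<Longrightarrow> y \<in> W vs K \<Longrightarrow> y \<in> CP vs"
proof (induction K arbitrary: y)
  case 0 then show ?case using W_empty[OF _ subsp_CP 0(3)] by simp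
next
  case (Suc K)
  show ?case
  proof (cases "K = 0")
    case True then show ?thesis using W_empty[OF _ subsp_CP Suc.prems(3)] by simp
  next
    case False
    then have K1: "1 \<le> K" and Km: "K < length vs - 1" using Suc.prems by auto
    have Klen: "K < length vs" using Km by auto
    let ?R = "irr (take (Suc K) vs)" and ?A = "IV (take (Suc K) vs)" and ?B = "PS (drop K vs)"
    have irrK: "is_irr_space src tgt G (take (Suc K) vs) ?R" by (rule Hyp_prefix[OF Hv K1 Klen])
    have y1: "y \<in> psum (W vs K) (TP K ?A ?B)" by (rule W_step[OF K1 Suc.prems(3)])
    have TPsub: "TP K ?A ?B \<subseteq> psum (TP K ?R ?B) (W vs K)"
    proof (rule TP_least[OF subsp_psum[OF subsp_TP subsp_W]], intro ballI)
      fix a b assume a: "a \<in> ?A" and b: "b \<in> ?B"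
      obtain f c where f: "f \<in> ?R" and c: "c \<in> CP (take (Suc K) vs)" and ac: "a = (\<lambda>x. f x + c x)"
        using irr_props(4)[OF irrK] a by blast
      have "tp K a b = (\<lambda>x. tp K f b x + tp K c b x)" unfolding ac tp_def by (simp add: distrib_right)
      then show "tp K a b \<in> psum (TP K ?R ?B) (W vs K)"
        using psumI[OF TP_gen[OF f b] CW[OF Klen c b]] by simp
    qed
    obtain w u where y: "y = (\<lambda>x. w x + u x)" and w: "w \<in> W vs K" and u: "u \<in> TP K ?A ?B"
      using y1 by (rule psumE)
    have "u \<in> psum (TP K ?R ?B) (W vs K)" using TPsub u by blast
    then obtain U w2 where u2: "u = (\<lambda>x. U x + w2 x)" and U: "U \<in> TP K ?R ?B" and w2: "w2 \<in> W vs K"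
      by (rule psumE)
    define w' where "w' = (\<lambda>x. w x + w2 x)"
    have w': "w' \<in> W vs K" unfolding w'_def by (rule subsp_add[OF subsp_W w w2])
    have yU: "y = (\<lambda>x. U x + w' x)" unfolding y u2 w'_def by (simp add: ac_simps)
    have Ueq: "U = (\<lambda>x. y x - w' x)" unfolding yU by simp
    have gU: "\<forall>g\<in>G. (\<lambda>x. GA g U x - U x) \<in> W vs K"
    proof
      fix g assume g: "g \<in> G"
      have e0: "GA g (\<lambda>x. y x - w' x) = (\<lambda>x. GA g y x - GA g w' x)" by (rule linop_diff[OF linop_gact])
      have e1: "GA g (\<lambda>x. y x - w' x) = (\<lambda>x. y x - GA g w' x)" using e0 IV_fix[OF Suc.prems(2) g] by simp
      have e2: "(\<lambda>x. GA g U x - U x) = (\<lambda>x. w' x - GA g w' x)" unfolding Ueq e1 by simp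
      have "(\<lambda>x. w' x - GA g w' x) \<in> W vs K" by (rule subsp_diff[OF subsp_W w' W_G[OF g w']])
      then show "(\<lambda>x. GA g U x - U x) \<in> W vs K" unfolding e2 .
    qed
    obtain n r b where Ur0: "U = (\<lambda>x. \<Sum>i<(n::nat). tp K (r i) (b i) x)" and rb: "\<forall>i<n. r i \<in> ?R \<and> b i \<in> ?B"
      by (rule TP_repr[OF U subsp_pspace])
    have Ur: "U = uu K n r b" unfolding Ur0 uu_def by simp
    have QK: "Qp (take (Suc K) vs)" using Qpre K1 Km by blast
    have l1: "\<forall>r b. (\<forall>i<n. r i \<in> ?R \<and> b i \<in> ?B) \<longrightarrow>
     (\<forall>g\<in>G. (\<lambda>x. GA g (uu K n r b) x - uu K n r b x) \<in> W vs K) \<longrightarrow>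
     uu K n r b \<in> TP K ?R (IV (drop K vs))" by (rule L1[OF K1 Klen QK irrK])
    have gU': "\<forall>g\<in>G. (\<lambda>x. GA g (uu K n r b) x - uu K n r b x) \<in> W vs K" using gU unfolding Ur .
    have "uu K n r b \<in> TP K ?R (IV (drop K vs))"
      by (rule mp[OF mp[OF l1[THEN spec[of _ r], THEN spec[of _ b]] rb] gU'])
    then have UT: "U \<in> TP K ?R (IV (drop K vs))" unfolding Ur .
    have "TP K ?R (IV (drop K vs)) \<subseteq> CP vs"
    proof (rule TP_least[OF subsp_CP], intro ballI)
      fix a b assume a: "a \<in> ?R" and b: "b \<in> IV (drop K vs)"
      have a': "a \<in> ?A" using irr_props(2)[OF irrK] a by blast
      show "tp K a b \<in> CP vs" by (rule comp_gen[OF _ a' b]) (use K1 Km in auto)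
    qed
    then have UC: "U \<in> CP vs" using UT by blast
    have w'eq: "w' = (\<lambda>x. y x - U x)" unfolding yU by simp
    have w'I: "w' \<in> IV vs" unfolding w'eq by (rule subsp_diff[OF subsp_IV Suc.prems(2) CP_IV[OF UC]])
    have "w' \<in> CP vs" by (rule Suc.IH[OF _ w'I w']) (use Km in simp)
    then show "y \<in> CP vs" unfolding yU by (rule subsp_add[OF subsp_CP UC])
  qed
qed

lemma Q_all: "\<forall>vs. length vs = L \<longrightarrow> 2 \<le> L \<longrightarrow> Hyp vs \<longrightarrow> Qp vs"
proof (induction L rule: less_induct)
  case (less L)
  show ?case
  proof (intro allI impI)
    fix vs assume l: "length vs = L" and l2: "2 \<le> L" and Hv: "Hyp vs"
    have Qpre: "\<forall>K. 1 \<le> K \<longrightarrow> K < length vs - 1 \<longrightarrow> Qp (take (Suc K) vs)"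
    proof (intro allI impI)
      fix K assume K1: "1 \<le> K" and Km: "K < length vs - 1"
      have a: "Suc K < L" "length (take (Suc K) vs) = Suc K" "2 \<le> Suc K" using K1 Km l by auto
      have h: "Hyp (take (Suc K) vs)" by (rule Hyp_take[OF Hv])
      have ih: "\<forall>vs. length vs = Suc K \<longrightarrow> 2 \<le> Suc K \<longrightarrow> Hyp vs \<longrightarrow> Qp vs" by (rule less.IH[OF a(1)])
      show "Qp (take (Suc K) vs)"
        by (rule mp[OF mp[OF mp[OF ih[THEN spec[of _ "take (Suc K) vs"]] a(2)] a(3)] h])
    qed
    show "Qp vs"
    proof (intro ballI impI)
      fix y assume y: "y \<in> irr vs" and yW: "y \<in> W vs (length vs - 1)"
      have irrv: "is_irr_space src tgt G vs (irr vs)" by (rule Hyp_self[OF Hv]) (use l l2 in simp)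
      have yI: "y \<in> IV vs" using irr_props(2)[OF irrv] y by auto
      have "y \<in> CP vs" by (rule Pm[OF _ Hv Qpre _ yI yW]) (use l l2 in simp)+
      then show "y = (\<lambda>x. 0)" using irr_props(3)[OF irrv] y by blast
    qed
  qed
qed

lemma Q: assumes "2 \<le> length vs" "Hyp vs" shows "Qp vs"
  using mp[OF mp[OF mp[OF Q_all[THEN spec[of _ vs]] refl] assms(1)] assms(2)] .

lemma TP_PS:
  assumes K: "K < length vs" and A: "A \<subseteq> PS (take (Suc K) vs)" and f: "f \<in> TP K A (PS (drop K vs))"
  shows "f \<in> PS vs"
proof -
  have "\<forall>a\<in>A. \<forall>b\<in>PS (drop K vs). (\<lambda>f. f) (tp K a b) \<in> PS vs"
  proof (intro ballI)
    fix a b assume a: "a \<in> A" and b: "b \<in> PS (drop K vs)"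
    show "(\<lambda>f. f) (tp K a b) \<in> PS vs" using pspace_tp[OF K subsetD[OF A a] b] by simp
  qed
  from TP_linop[OF linop_id subsp_pspace this f] show ?thesis by simp
qed

lemma DIR:
  assumes len: "2 \<le> length vs" and Hv: "Hyp vs"
    and u: "\<forall>n\<in>{1..<length vs - 1}. u n \<in> TP n (irr (take (Suc n) vs)) (PS (drop n vs))"
  shows "N < length vs - 1 \<Longrightarrow> (\<lambda>x. \<Sum>n\<in>{1..N}. u n x) = (\<lambda>x. 0) \<Longrightarrow> \<forall>n\<in>{1..N}. u n = (\<lambda>x. 0)"
proof (induction N)
  case 0 then show ?case by simp
next
  case (Suc N)
  let ?K = "Suc N"
  have Klen: "?K < length vs" using Suc.prems by auto
  have irrK: "is_irr_space src tgt G (take (Suc ?K) vs) (irr (take (Suc ?K) vs))"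
    by (rule Hyp_prefix[OF Hv]) (use Klen in auto)
  have QK: "Qp (take (Suc ?K) vs)" by (rule Q) (use Klen Hyp_take[OF Hv] in auto)
  have sumeq: "(\<lambda>x. \<Sum>n\<in>{1..Suc N}. u n x) = (\<lambda>x. (\<Sum>n\<in>{1..N}. u n x) + u ?K x)" by simp
  have lower: "(\<lambda>x. \<Sum>n\<in>{1..N}. u n x) \<in> W vs ?K"
  proof (rule subsp_setsum[OF subsp_W], intro ballI)
    fix n assume n: "n \<in> {1..N}"
    have nl: "n \<in> {1..<length vs - 1}" using n Suc.prems by auto
    have irrn: "is_irr_space src tgt G (take (Suc n) vs) (irr (take (Suc n) vs))"
      by (rule Hyp_prefix[OF Hv]) (use nl in auto)
    have "u n \<in> TP n (IV (take (Suc n) vs)) (PS (drop n vs))"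
      using TP_mono[OF irr_props(2)[OF irrn] subset_refl] u nl by blast
    then show "u n \<in> W vs ?K" by (rule W_TP[rotated]) (use n in auto)
  qed
  have uK: "u ?K \<in> TP ?K (irr (take (Suc ?K) vs)) (PS (drop ?K vs))" using u Suc.prems by auto
  have RP: "irr (take (Suc ?K) vs) \<subseteq> PS (take (Suc ?K) vs)" using irr_props(2)[OF irrK] IV_P by blast
  have lK: "length (take (Suc ?K) vs) = Suc ?K" using Klen by auto
  have uK0: "u ?K = (\<lambda>x. 0)"
  proof (rule sl_recover)
    have uP: "u ?K \<in> PS vs" by (rule TP_PS[OF Klen RP uK])
    show "\<forall>x. length x < ?K \<longrightarrow> u ?K x = 0"
      using pspace_len[OF uP] Suc.prems by auto
    show "\<forall>z. sl ?K z (u ?K) = (\<lambda>x. 0)"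
    proof
      fix z :: "'a list"
      have ue: "u ?K = (\<lambda>x. - (\<Sum>n\<in>{1..N}. u n x))"
      proof
        fix x
        have "(\<Sum>n\<in>{1..N}. u n x) + u ?K x = 0" using fun_cong[OF Suc.prems(2), of x] by simp
        then show "u ?K x = - (\<Sum>n\<in>{1..N}. u n x)" by (simp add: eq_neg_iff_add_eq_0 add.commute)
      qed
      have A: "sl ?K z (u ?K) \<in> irr (take (Suc ?K) vs)"
      proof (rule TP_linop[OF linop_sl irr_props(1)[OF irrK] _ uK], intro ballI)
        fix a b assume a: "a \<in> irr (take (Suc ?K) vs)" and b: "b \<in> PS (drop ?K vs)"
        have av: "\<forall>x. length x \<noteq> ?K \<longrightarrow> a x = 0" using pspace_vanish[OF _ lK] RP a by blast
        have "sl ?K z (tp ?K a b) = (\<lambda>x. b z * a x)" by (rule sl_tp_same[OF av])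
        then show "sl ?K z (tp ?K a b) \<in> irr (take (Suc ?K) vs)"
          using subsp_scale[OF irr_props(1)[OF irrK] a] by simp
      qed
      have "(\<lambda>x. - (\<Sum>n\<in>{1..N}. u n x)) \<in> W vs ?K" by (rule subsp_neg[OF subsp_W lower])
      then have B: "sl ?K z (u ?K) \<in> W (take (Suc ?K) vs) ?K" unfolding ue[symmetric] by (rule W_sl[OF Klen])
      show "sl ?K z (u ?K) = (\<lambda>x. 0)" using QK A B lK by simp
    qed
  qed
  have "(\<lambda>x. \<Sum>n\<in>{1..N}. u n x) = (\<lambda>x. 0)" using Suc.prems(2) unfolding sumeq uK0 by simp
  then have "\<forall>n\<in>{1..N}. u n = (\<lambda>x. 0)" by (rule Suc.IH[rotated]) (use Suc.prems in simp)
  then show ?case using uK0 by (auto simp: le_Suc_eq)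
qed

end


lemma len_le_sum_list: "\<forall>x\<in>set ps. 0 < (x::nat) \<Longrightarrow> length ps \<le> sum_list ps"
  by (induction ps) auto

lemma finite_parts: "finite (ord_partitions m)"
proof -
  have "ord_partitions m \<subseteq> {xs. set xs \<subseteq> {..m} \<and> length xs \<le> m}"
  proof
    fix ps assume "ps \<in> ord_partitions m"
    then have p: "\<forall>x\<in>set ps. 0 < x" "sum_list ps = m" unfolding ord_partitions_def by auto
    have "set ps \<subseteq> {..m}" using member_le_sum_list[of _ ps] p by auto
    moreover have "length ps \<le> m" using len_le_sum_list[OF p(1)] p(2) by simp
    ultimately show "ps \<in> {xs. set xs \<subseteq> {..m} \<and> length xs \<le> m}" by simp
  qed
  then show ?thesis using finite_lists_length_le[of "{..m}" m] finite_subset by blast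
qed

lemma parts_nonempty: "p \<in> ord_partitions m \<Longrightarrow> p \<noteq> []"
  unfolding ord_partitions_def by simp

lemma parts_dec:
  assumes m: "1 \<le> m"
  shows "ord_partitions m = insert [m] (\<Union>n\<in>{1..<m}. Cons n ` ord_partitions (m - n))"
proof
  show "ord_partitions m \<subseteq> insert [m] (\<Union>n\<in>{1..<m}. Cons n ` ord_partitions (m - n))"
  proof
    fix ps assume ps: "ps \<in> ord_partitions m"
    then obtain n p' where e: "ps = n # p'" unfolding ord_partitions_def by (cases ps) auto
    have h: "0 < n" "\<forall>x\<in>set p'. 0 < x" "n + sum_list p' = m" using ps unfolding e ord_partitions_def by auto
    show "ps \<in> insert [m] (\<Union>n\<in>{1..<m}. Cons n ` ord_partitions (m - n))"
    proof (cases "p' = []")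
      case True then show ?thesis using e h by simp
    next
      case False
      then have "sum_list p' \<ge> 1" using h(2) by (cases p') auto
      then have n: "n \<in> {1..<m}" using h by auto
      have "p' \<in> ord_partitions (m - n)" unfolding ord_partitions_def using False h by auto
      then show ?thesis using e n by blast
    qed
  qed
  show "insert [m] (\<Union>n\<in>{1..<m}. Cons n ` ord_partitions (m - n)) \<subseteq> ord_partitions m"
  proof
    fix ps assume "ps \<in> insert [m] (\<Union>n\<in>{1..<m}. Cons n ` ord_partitions (m - n))"
    then show "ps \<in> ord_partitions m"
    proof
      assume "ps = [m]" then show ?thesis using m unfolding ord_partitions_def by simp
    next
      assume "ps \<in> (\<Union>n\<in>{1..<m}. Cons n ` ord_partitions (m - n))"
      then obtain n p' where "n \<in> {1..<m}" "p' \<in> ord_partitions (m - n)" "ps = n # p'" by blast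
      then show ?thesis unfolding ord_partitions_def by auto
    qed
  qed
qed

lemma parts_sum:
  assumes m: "1 \<le> m"
  shows "(\<Sum>p\<in>ord_partitions m. F p) = F [m] + (\<Sum>n\<in>{1..<m}. \<Sum>p'\<in>ord_partitions (m - n). F (n # p'))"
proof -
  have fin: "finite (\<Union>n\<in>{1..<m}. Cons n ` ord_partitions (m - n))" using finite_parts by auto
  have notin: "[m] \<notin> (\<Union>n\<in>{1..<m}. Cons n ` ord_partitions (m - n))" using parts_nonempty by auto
  have "(\<Sum>p\<in>ord_partitions m. F p) = F [m] + (\<Sum>p\<in>(\<Union>n\<in>{1..<m}. Cons n ` ord_partitions (m - n)). F p)"
    unfolding parts_dec[OF m] using fin notin by simp
  also have "(\<Sum>p\<in>(\<Union>n\<in>{1..<m}. Cons n ` ord_partitions (m - n)). F p) =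
      (\<Sum>n\<in>{1..<m}. \<Sum>p\<in>Cons n ` ord_partitions (m - n). F p)"
    by (rule sum.UNION_disjoint) (auto simp: finite_parts)
  also have "\<dots> = (\<Sum>n\<in>{1..<m}. \<Sum>p'\<in>ord_partitions (m - n). F (n # p'))"
    by (rule sum.cong[OF refl], rule sum.reindex_cong[of "Cons _"]) (auto simp: inj_on_def)
  finally show ?thesis .
qed

lemma TP_lspan: "TP n (lspan A) (lspan B) = TP n A B"
proof
  show "TP n A B \<subseteq> TP n (lspan A) (lspan B)" by (intro TP_mono lspan_sub)
  have "\<forall>a\<in>lspan A. \<forall>b\<in>lspan B. tp n a b \<in> TP n A B"
  proof (intro ballI)
    fix a b assume a: "a \<in> lspan A" and b: "b \<in> lspan B"
    have 1: "\<forall>a'\<in>A. tp n a' b \<in> TP n A B"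
    proof
      fix a' assume a': "a' \<in> A"
      have "\<forall>s\<in>B. tp n a' s \<in> TP n A B" using TP_gen[OF a'] by simp
      from lspan_linop[OF linop_tp_right[of n a'] subsp_TP[of n A B] this b]
      show "tp n a' b \<in> TP n A B" .
    qed
    show "tp n a b \<in> TP n A B"
      using lspan_linop[OF linop_tp_left[of n b] subsp_TP[of n A B] 1 a] by simp
  qed
  then show "TP n (lspan A) (lspan B) \<subseteq> TP n A B" by (intro TP_least[OF subsp_TP])
qed

lemma TP_sumset:
  assumes B: "B \<subseteq> sumset F X" and X: "\<forall>p\<in>F. subsp (X p)"
  shows "TP n A B \<subseteq> sumset F (\<lambda>p. TP n A (X p))"
proof -
  have sub: "subsp (sumset F (\<lambda>p. TP n A (X p)))" by (rule subsp_sumset) (simp add: subsp_TP)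
  have "\<forall>a\<in>A. \<forall>b\<in>B. tp n a b \<in> sumset F (\<lambda>p. TP n A (X p))"
  proof (intro ballI)
    fix a b assume a: "a \<in> A" and b: "b \<in> B"
    obtain w where w: "b = (\<lambda>x. \<Sum>p\<in>F. w p x)" "\<forall>p\<in>F. w p \<in> X p" using subsetD[OF B b] by (rule sumsetE)
    have "tp n a b = (\<lambda>x. \<Sum>p\<in>F. tp n a (w p) x)" unfolding w(1) tp_def by (simp add: sum_distrib_left)
    moreover have "(\<lambda>x. \<Sum>p\<in>F. tp n a (w p) x) \<in> sumset F (\<lambda>p. TP n A (X p))"
      by (rule sumsetI) (use w(2) a TP_gen in blast)
    ultimately show "tp n a b \<in> sumset F (\<lambda>p. TP n A (X p))" by simp
  qed
  then show ?thesis by (rule TP_least[OF sub])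
qed

definition lsl :: "'a list \<Rightarrow> ('a list \<Rightarrow> 'k::field) \<Rightarrow> 'a list \<Rightarrow> 'k" where
  "lsl x1 f = (\<lambda>y. f (x1 @ y))"

lemma linop_lsl: "linop (lsl x1)" unfolding linop_def lsl_def by simp

lemma TP_short:
  fixes f :: "'a list \<Rightarrow> 'k::field"
  assumes A: "\<forall>a\<in>A. \<forall>x. length x \<noteq> n \<longrightarrow> a x = 0" and f: "f \<in> TP n A B"
  shows "\<forall>x. length x < n \<longrightarrow> f x = 0"
proof -
  have sub: "subsp {f :: 'a list \<Rightarrow> 'k. \<forall>x. length x < n \<longrightarrow> f x = 0}" unfolding subsp_def by auto
  have "\<forall>a\<in>A. \<forall>b\<in>B. (\<lambda>f. f) (tp n a b) \<in> {f. \<forall>x. length x < n \<longrightarrow> f x = 0}"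
    using A unfolding tp_def by auto
  from TP_linop[OF linop_id sub this f] show ?thesis by simp
qed

lemma LS:
  fixes v :: "'i \<Rightarrow> 'a list \<Rightarrow> 'k::field"
  assumes A: "\<forall>a\<in>A. \<forall>x. length x \<noteq> n \<longrightarrow> a x = 0"
    and Bs: "\<forall>p\<in>F. subsp (B p)"
    and inj: "\<forall>w. (\<forall>p\<in>F. w p \<in> B p) \<longrightarrow> (\<lambda>x. \<Sum>p\<in>F. w p x) = (\<lambda>x. 0) \<longrightarrow> (\<forall>p\<in>F. w p = (\<lambda>x. 0))"
    and v: "\<forall>p\<in>F. v p \<in> TP n A (B p)" and s: "(\<lambda>x. \<Sum>p\<in>F. v p x) = (\<lambda>x. 0)"
  shows "\<forall>p\<in>F. v p = (\<lambda>x. 0)"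
proof
  fix p assume p: "p \<in> F"
  show "v p = (\<lambda>x. 0)"
  proof
    fix x :: "'a list"
    show "v p x = 0"
    proof (cases "length x < n")
      case True then show ?thesis using TP_short[OF A] v p by blast
    next
      case False
      let ?x1 = "take n x"
      have lx: "length ?x1 = n" using False by simp
      have "\<forall>q\<in>F. lsl ?x1 (v q) \<in> B q"
      proof
        fix q assume q: "q \<in> F"
        have "\<forall>a\<in>A. \<forall>b\<in>B q. lsl ?x1 (tp n a b) \<in> B q"
        proof (intro ballI)
          fix a b assume "a \<in> A" "b \<in> B q"
          have "lsl ?x1 (tp n a b) = (\<lambda>y. a ?x1 * b y)" unfolding lsl_def tp_def using lx by simp
          then show "lsl ?x1 (tp n a b) \<in> B q" using subsp_scale[OF _ \<open>b \<in> B q\<close>] Bs q by simp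
        qed
        from TP_linop[OF linop_lsl _ this] Bs q v show "lsl ?x1 (v q) \<in> B q" by blast
      qed
      moreover have "(\<lambda>y. \<Sum>q\<in>F. lsl ?x1 (v q) y) = (\<lambda>y. 0)"
        using s unfolding lsl_def by (metis (no_types))
      ultimately have "\<forall>q\<in>F. lsl ?x1 (v q) = (\<lambda>y. 0)"
        using inj[THEN spec[of _ "\<lambda>q. lsl (take n x) (v q)"]] by simp
      then have "lsl ?x1 (v p) (drop n x) = 0" using p by simp
      then show ?thesis unfolding lsl_def by simp
    qed
  qed
qed


context qctx
begin

lemma irr_prod_single:
  assumes len: "2 \<le> length vs" and Hv: "Hyp vs"
  shows "irr_prod vs irr [length vs - 1] = irr vs"
proof -
  let ?m = "length vs - 1"
  have irrv: "is_irr_space src tgt G vs (irr vs)" by (rule Hyp_self[OF Hv len])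
  have sv: "seg vs 0 ?m = vs" using len by (simp add: seg_0)
  have lv: "length vs = Suc ?m" using len by simp
  have gens: "{tprodl [?m] fs | fs. length fs = length [?m] \<and>
      (\<forall>t<length [?m]. fs ! t \<in> irr (seg vs (sum_list (take t [?m])) ([?m] ! t)))} = irr vs"
  proof (intro set_eqI iffI)
    fix x assume "x \<in> {tprodl [?m] fs | fs. length fs = length [?m] \<and>
      (\<forall>t<length [?m]. fs ! t \<in> irr (seg vs (sum_list (take t [?m])) ([?m] ! t)))}"
    then obtain fs where x: "x = tprodl [?m] fs" "length fs = 1" "fs ! 0 \<in> irr (seg vs 0 ?m)" by auto
    then obtain f where fs: "fs = [f]" by (cases fs) auto
    have f: "f \<in> irr vs" using x(3) sv fs by simp
    have "f \<in> PS vs" using f irr_props(2)[OF irrv] IV_P by blast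
    from tprodl1[OF this lv] show "x \<in> irr vs" using x(1) fs f by simp
  next
    fix x assume x: "x \<in> irr vs"
    have "x \<in> PS vs" using x irr_props(2)[OF irrv] IV_P by blast
    from tprodl1[OF this lv] have e: "x = tprodl [?m] [x]" by simp
    show "x \<in> {tprodl [?m] fs | fs. length fs = length [?m] \<and>
      (\<forall>t<length [?m]. fs ! t \<in> irr (seg vs (sum_list (take t [?m])) ([?m] ! t)))}"
      by (intro CollectI exI[of _ "[x]"]) (use e x sv in simp)
  qed
  show ?thesis unfolding irr_prod_def gens using lspan_idem[OF irr_props(1)[OF irrv]] by simp
qed

lemma irr_prod_cons:
  assumes Hv: "Hyp vs" and n: "1 \<le> n" "n < length vs - 1"
  shows "irr_prod vs irr (n # p') = TP n (irr (take (Suc n) vs)) (irr_prod (drop n vs) irr p')"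
proof -
  let ?A = "irr (take (Suc n) vs)"
  define Gen where "Gen ws ps = {tprodl ps fs | fs. length fs = length ps \<and>
      (\<forall>t<length ps. fs ! t \<in> irr (seg ws (sum_list (take t ps)) (ps ! t)))}" for ws ps
  have ge: "Gen vs (n # p') = {tp n a b | a b. a \<in> ?A \<and> b \<in> Gen (drop n vs) p'}"
  proof (intro set_eqI iffI)
    fix x assume "x \<in> Gen vs (n # p')"
    then obtain fs where x: "x = tprodl (n # p') fs" "length fs = Suc (length p')"
      "\<forall>t<Suc (length p'). fs ! t \<in> irr (seg vs (sum_list (take t (n # p'))) ((n # p') ! t))"
      unfolding Gen_def by auto
    then obtain f fs' where fs: "fs = f # fs'" by (cases fs) auto
    have f: "f \<in> ?A" using x(3)[rule_format, of 0] fs by (simp add: seg_0)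
    have fs': "\<forall>t<length p'. fs' ! t \<in> irr (seg (drop n vs) (sum_list (take t p')) (p' ! t))"
    proof (intro allI impI)
      fix t assume "t < length p'"
      then show "fs' ! t \<in> irr (seg (drop n vs) (sum_list (take t p')) (p' ! t))"
        using x(3)[rule_format, of "Suc t"] fs by (simp add: seg_drop)
    qed
    have e: "x = tp n f (tprodl p' fs')" unfolding x(1) fs tp_def by (rule ext) simp
    have "tprodl p' fs' \<in> Gen (drop n vs) p'" unfolding Gen_def using fs' x(2) fs
      by (intro CollectI exI[of _ fs']) simp
    then show "x \<in> {tp n a b | a b. a \<in> ?A \<and> b \<in> Gen (drop n vs) p'}" using e f by blast
  next
    fix x assume "x \<in> {tp n a b | a b. a \<in> ?A \<and> b \<in> Gen (drop n vs) p'}"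
    then obtain a b where ab: "x = tp n a b" "a \<in> ?A" "b \<in> Gen (drop n vs) p'" by blast
    then obtain fs' where b: "b = tprodl p' fs'" "length fs' = length p'"
      "\<forall>t<length p'. fs' ! t \<in> irr (seg (drop n vs) (sum_list (take t p')) (p' ! t))"
      unfolding Gen_def by blast
    have e: "x = tprodl (n # p') (a # fs')" unfolding ab(1) b(1) tp_def by (rule ext) simp
    have c: "\<forall>t<length (n # p'). (a # fs') ! t \<in> irr (seg vs (sum_list (take t (n # p'))) ((n # p') ! t))"
    proof (intro allI impI)
      fix t assume t: "t < length (n # p')"
      show "(a # fs') ! t \<in> irr (seg vs (sum_list (take t (n # p'))) ((n # p') ! t))"
      proof (cases t)
        case 0 then show ?thesis using ab(2) by (simp add: seg_0)
      next
        case (Suc t') then show ?thesis using b(3) t by (simp add: seg_drop)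
      qed
    qed
    show "x \<in> Gen vs (n # p')" unfolding Gen_def using e c b(2)
      by (intro CollectI exI[of _ "a # fs'"]) simp
  qed
  have irrn: "is_irr_space src tgt G (take (Suc n) vs) ?A" by (rule Hyp_prefix[OF Hv n(1)]) (use n in simp)
  have ipG: "irr_prod ws irr ps = lspan (Gen ws ps)" for ws ps unfolding irr_prod_def Gen_def ..
  have "irr_prod vs irr (n # p') = TP n ?A (Gen (drop n vs) p')"
    unfolding ipG ge TP_def ..
  also have "\<dots> = TP n (lspan ?A) (lspan (Gen (drop n vs) p'))" by (rule TP_lspan[symmetric])
  also have "\<dots> = TP n ?A (irr_prod (drop n vs) irr p')"
    unfolding ipG lspan_idem[OF irr_props(1)[OF irrn]] ..
  finally show ?thesis .
qed

lemma subsp_irr_prod: "subsp (irr_prod vs irr p)" unfolding irr_prod_def by (rule subsp_lspan)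

end


context qctx
begin

lemma part_cases:
  assumes "1 \<le> m" "p \<in> ord_partitions m"
  obtains "p = [m]" | n p' where "n \<in> {1..<m}" "p' \<in> ord_partitions (m - n)" "p = n # p'"
  using assms parts_dec[OF assms(1)] by blast

lemma D1: "\<forall>vs. length vs = L \<longrightarrow> 2 \<le> L \<longrightarrow> Hyp vs \<longrightarrow>
    (\<forall>p\<in>ord_partitions (length vs - 1). irr_prod vs irr p \<subseteq> IV vs)"
proof (induction L rule: less_induct)
  case (less L)
  show ?case
  proof (intro allI impI ballI)
    fix vs p assume l: "length vs = L" and l2: "2 \<le> L" and Hv: "Hyp vs"
      and p: "p \<in> ord_partitions (length vs - 1)"
    let ?m = "length vs - 1"
    have m1: "1 \<le> ?m" using l l2 by simp
    show "irr_prod vs irr p \<subseteq> IV vs"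
      using m1 p
    proof (cases rule: part_cases)
      case 1
      then show ?thesis using irr_prod_single[OF _ Hv] irr_props(2)[OF Hyp_self[OF Hv]] l l2 by simp
    next
      case (2 n p')
      have ld: "length (drop n vs) < L" "2 \<le> length (drop n vs)" using 2 l by auto
      have ih: "\<forall>vs'. length vs' = length (drop n vs) \<longrightarrow> 2 \<le> length (drop n vs) \<longrightarrow> Hyp vs' \<longrightarrow>
        (\<forall>p\<in>ord_partitions (length vs' - 1). irr_prod vs' irr p \<subseteq> IV vs')" by (rule less.IH[OF ld(1)])
      have "(\<forall>p\<in>ord_partitions (length (drop n vs) - 1). irr_prod (drop n vs) irr p \<subseteq> IV (drop n vs))"
        by (rule mp[OF mp[OF mp[OF ih[THEN spec[of _ "drop n vs"]] refl] ld(2)] Hyp_drop[OF Hv]])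
      then have ih': "irr_prod (drop n vs) irr p' \<subseteq> IV (drop n vs)" using 2 by simp
      have nl: "n < length vs" using 2 by auto
      have irrn: "is_irr_space src tgt G (take (Suc n) vs) (irr (take (Suc n) vs))"
        by (rule Hyp_prefix[OF Hv]) (use 2 in auto)
      have "TP n (irr (take (Suc n) vs)) (irr_prod (drop n vs) irr p') \<subseteq> IV vs"
      proof (rule TP_least[OF subsp_IV], intro ballI)
        fix a b assume a: "a \<in> irr (take (Suc n) vs)" and b: "b \<in> irr_prod (drop n vs) irr p'"
        show "tp n a b \<in> IV vs"
          by (rule IV_tp[OF nl]) (use a b ih' irr_props(2)[OF irrn] in auto)
      qed
      then show ?thesis using irr_prod_cons[OF Hv, of n p'] 2 by auto
    qed
  qed
qed

lemma D1': "2 \<le> length vs \<Longrightarrow> Hyp vs \<Longrightarrow> p \<in> ord_partitions (length vs - 1) \<Longrightarrow> irr_prod vs irr p \<subseteq> IV vs"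
  using D1 by blast

lemma SP:
  assumes len: "2 \<le> length vs" and Hv: "Hyp vs"
  shows "CP vs \<subseteq> lspan (\<Union>n\<in>{1..<length vs - 1}. TP n (irr (take (Suc n) vs)) (IV (drop n vs)))"
proof -
  let ?S = "lspan (\<Union>n\<in>{1..<length vs - 1}. TP n (irr (take (Suc n) vs)) (IV (drop n vs)))"
  have claim: "n \<in> {1..<length vs - 1} \<Longrightarrow> TP n (IV (take (Suc n) vs)) (IV (drop n vs)) \<subseteq> ?S" for n
  proof (induction n rule: less_induct)
    case (less n)
    have nl: "n < length vs" using less.prems by auto
    have irrn: "is_irr_space src tgt G (take (Suc n) vs) (irr (take (Suc n) vs))"
      by (rule Hyp_prefix[OF Hv]) (use less.prems in auto)
    show ?case
    proof (rule TP_least[OF subsp_lspan], intro ballI)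
      fix a b assume a: "a \<in> IV (take (Suc n) vs)" and b: "b \<in> IV (drop n vs)"
      obtain f c where f: "f \<in> irr (take (Suc n) vs)" and c: "c \<in> CP (take (Suc n) vs)" and ac: "a = (\<lambda>x. f x + c x)"
        using irr_props(4)[OF irrn] a by blast
      have e: "tp n a b = (\<lambda>x. tp n f b x + tp n c b x)" unfolding ac tp_def by (simp add: distrib_right)
      have "tp n f b \<in> (\<Union>n\<in>{1..<length vs - 1}. TP n (irr (take (Suc n) vs)) (IV (drop n vs)))"
        by (rule UN_I[OF less.prems], rule TP_gen[OF f b])
      then have A: "tp n f b \<in> ?S" using lspan_sub by (rule subsetD[rotated])
      have "\<forall>n'\<in>{1..<length (take (Suc n) vs) - 1}. \<forall>g\<in>IV (take (Suc n') (take (Suc n) vs)).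
         \<forall>f'\<in>IV (drop n' (take (Suc n) vs)). tp n (tp n' g f') b \<in> ?S"
      proof (intro ballI)
        fix n' g f' assume n': "n' \<in> {1..<length (take (Suc n) vs) - 1}"
          and g: "g \<in> IV (take (Suc n') (take (Suc n) vs))" and f': "f' \<in> IV (drop n' (take (Suc n) vs))"
        have n'n: "n' < n" "1 \<le> n'" using n' nl by auto
        have e2: "tp n (tp n' g f') b = tp n' g (tp (n - n') f' b)" using n'n by (simp add: tp_assoc)
        have g': "g \<in> IV (take (Suc n') vs)" using g n'n by (simp add: min_def)
        have "drop n' (take (Suc n) vs) = take (Suc (n - n')) (drop n' vs)" using n'n by (simp add: drop_take Suc_diff_le)
        then have f'': "f' \<in> IV (take (Suc (n - n')) (drop n' vs))" using f' by simp
        have b': "b \<in> IV (drop (n - n') (drop n' vs))" using b n'n by simp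
        have "n - n' < length (drop n' vs)" using n'n nl by auto
        from IV_tp[OF this f'' b'] have "tp (n - n') f' b \<in> IV (drop n' vs)" .
        then have "tp n' g (tp (n - n') f' b) \<in> TP n' (IV (take (Suc n') vs)) (IV (drop n' vs))"
          by (rule TP_gen[OF g'])
        moreover have "n' \<in> {1..<length vs - 1}" using n'n less.prems by auto
        ultimately show "tp n (tp n' g f') b \<in> ?S" using less.IH[OF n'n(1)] e2 by auto
      qed
      from comp_linop[OF linop_tp_left subsp_lspan this c] have B: "tp n c b \<in> ?S" .
      show "tp n a b \<in> ?S" unfolding e by (rule subsp_add[OF subsp_lspan A B])
    qed
  qed
  show ?thesis
  proof
    fix c assume c: "c \<in> CP vs"
    have "\<forall>n\<in>{1..<length vs - 1}. \<forall>g\<in>IV (take (Suc n) vs). \<forall>f\<in>IV (drop n vs). (\<lambda>f. f) (tp n g f) \<in> ?S"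
      using claim TP_gen by fastforce
    from comp_linop[OF linop_id subsp_lspan this c] show "c \<in> ?S" by simp
  qed
qed

end


context qctx
begin

lemma D2: "\<forall>vs. length vs = L \<longrightarrow> 2 \<le> L \<longrightarrow> Hyp vs \<longrightarrow>
    IV vs \<subseteq> sumset (ord_partitions (length vs - 1)) (irr_prod vs irr)"
proof (induction L rule: less_induct)
  case (less L)
  show ?case
  proof (intro allI impI subsetI)
    fix vs y assume l: "length vs = L" and l2: "2 \<le> L" and Hv: "Hyp vs" and y: "y \<in> IV vs"
    let ?m = "length vs - 1"
    have m1: "1 \<le> ?m" using l l2 by simp
    have len: "2 \<le> length vs" using l l2 by simp
    have irrv: "is_irr_space src tgt G vs (irr vs)" by (rule Hyp_self[OF Hv len])
    obtain f c where f: "f \<in> irr vs" and c: "c \<in> CP vs" and yfc: "y = (\<lambda>x. f x + c x)"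
      using irr_props(4)[OF irrv] y by blast
    have "\<forall>n\<in>{1..<?m}. subsp (TP n (irr (take (Suc n) vs)) (IV (drop n vs)))" by (simp add: subsp_TP)
    from lspan_union_sumset[OF _ this] SP[OF len Hv] c
    have "c \<in> sumset {1..<?m} (\<lambda>n. TP n (irr (take (Suc n) vs)) (IV (drop n vs)))" by auto
    then obtain z where cz: "c = (\<lambda>x. \<Sum>n\<in>{1..<?m}. z n x)"
      and z: "\<forall>n\<in>{1..<?m}. z n \<in> TP n (irr (take (Suc n) vs)) (IV (drop n vs))" by (rule sumsetE)
    have "\<forall>n\<in>{1..<?m}. \<exists>w. z n = (\<lambda>x. \<Sum>p'\<in>ord_partitions (?m - n). w p' x) \<and>
        (\<forall>p'\<in>ord_partitions (?m - n). w p' \<in> irr_prod vs irr (n # p'))"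
    proof
      fix n assume n: "n \<in> {1..<?m}"
      have ld: "length (drop n vs) < L" "2 \<le> length (drop n vs)" using n l by auto
      have ih: "\<forall>vs'. length vs' = length (drop n vs) \<longrightarrow> 2 \<le> length (drop n vs) \<longrightarrow> Hyp vs' \<longrightarrow>
         IV vs' \<subseteq> sumset (ord_partitions (length vs' - 1)) (irr_prod vs' irr)" by (rule less.IH[OF ld(1)])
      have "IV (drop n vs) \<subseteq> sumset (ord_partitions (length (drop n vs) - 1)) (irr_prod (drop n vs) irr)"
        by (rule mp[OF mp[OF mp[OF ih[THEN spec[of _ "drop n vs"]] refl] ld(2)] Hyp_drop[OF Hv]])
      then have ihd: "IV (drop n vs) \<subseteq> sumset (ord_partitions (?m - n)) (irr_prod (drop n vs) irr)" by simp
      have "\<forall>p\<in>ord_partitions (?m - n). subsp (irr_prod (drop n vs) irr p)" by (simp add: subsp_irr_prod)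
      from TP_sumset[OF ihd this, of n "irr (take (Suc n) vs)"] z n
      have "z n \<in> sumset (ord_partitions (?m - n)) (\<lambda>p'. TP n (irr (take (Suc n) vs)) (irr_prod (drop n vs) irr p'))"
        by blast
      moreover have "(\<lambda>p'. TP n (irr (take (Suc n) vs)) (irr_prod (drop n vs) irr p')) = (\<lambda>p'. irr_prod vs irr (n # p'))"
        using irr_prod_cons[OF Hv] n by auto
      ultimately have "z n \<in> sumset (ord_partitions (?m - n)) (\<lambda>p'. irr_prod vs irr (n # p'))" by simp
      then obtain w where "z n = (\<lambda>x. \<Sum>p'\<in>ord_partitions (?m - n). w p' x)"
        "\<forall>p'\<in>ord_partitions (?m - n). w p' \<in> irr_prod vs irr (n # p')" by (rule sumsetE)
      then show "\<exists>w. z n = (\<lambda>x. \<Sum>p'\<in>ord_partitions (?m - n). w p' x) \<and>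
        (\<forall>p'\<in>ord_partitions (?m - n). w p' \<in> irr_prod vs irr (n # p'))" by blast
    qed
    from bchoice[OF this] obtain Wf where Wf: "\<forall>n\<in>{1..<?m}. z n = (\<lambda>x. \<Sum>p'\<in>ord_partitions (?m - n). Wf n p' x) \<and>
        (\<forall>p'\<in>ord_partitions (?m - n). Wf n p' \<in> irr_prod vs irr (n # p'))" ..
    define Y where "Y p = (if p = [?m] then f else Wf (hd p) (tl p))" for p
    have Ymem: "\<forall>p\<in>ord_partitions ?m. Y p \<in> irr_prod vs irr p"
    proof
      fix p assume p: "p \<in> ord_partitions ?m"
      show "Y p \<in> irr_prod vs irr p" using m1 p
      proof (cases rule: part_cases)
        case 1 then show ?thesis using f irr_prod_single[OF len Hv] unfolding Y_def by simp
      next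
        case (2 n p')
        then have "p \<noteq> [?m]" using parts_nonempty by auto
        then show ?thesis using Wf 2 unfolding Y_def by simp
      qed
    qed
    have "y = (\<lambda>x. \<Sum>p\<in>ord_partitions ?m. Y p x)"
    proof
      fix x
      have inner: "(\<Sum>p'\<in>ord_partitions (?m - n). Y (n # p') x) = z n x" if n: "n \<in> {1..<?m}" for n
      proof -
        have "(\<Sum>p'\<in>ord_partitions (?m - n). Y (n # p') x) = (\<Sum>p'\<in>ord_partitions (?m - n). Wf n p' x)"
          by (rule sum.cong[OF refl]) (use parts_nonempty in \<open>auto simp: Y_def\<close>)
        also have "\<dots> = z n x" using Wf n by simp
        finally show ?thesis .
      qed
      have "(\<Sum>p\<in>ord_partitions ?m. Y p x) = Y [?m] x + (\<Sum>n\<in>{1..<?m}. \<Sum>p'\<in>ord_partitions (?m - n). Y (n # p') x)"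
        by (rule parts_sum[OF m1])
      also have "\<dots> = f x + (\<Sum>n\<in>{1..<?m}. z n x)"
      proof -
        have s: "(\<Sum>n\<in>{1..<?m}. \<Sum>p'\<in>ord_partitions (?m - n). Y (n # p') x) = (\<Sum>n\<in>{1..<?m}. z n x)"
          by (rule sum.cong[OF refl], rule inner)
        have "Y [?m] x = f x" unfolding Y_def by simp
        then show ?thesis using s by simp
      qed
      also have "\<dots> = y x" unfolding yfc cz by simp
      finally show "y x = (\<Sum>p\<in>ord_partitions ?m. Y p x)" by simp
    qed
    then show "y \<in> sumset (ord_partitions (length vs - 1)) (irr_prod vs irr)" using sumsetI[OF Ymem] by simp
  qed
qed

end


context qctx
begin

lemma D3: "\<forall>vs. length vs = L \<longrightarrow> 2 \<le> L \<longrightarrow> Hyp vs \<longrightarrow>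
  (\<forall>Y. (\<forall>p\<in>ord_partitions (length vs - 1). Y p \<in> irr_prod vs irr p) \<longrightarrow>
     (\<lambda>x. \<Sum>p\<in>ord_partitions (length vs - 1). Y p x) = (\<lambda>x. 0) \<longrightarrow>
     (\<forall>p\<in>ord_partitions (length vs - 1). Y p = (\<lambda>x. 0)))"
proof (induction L rule: less_induct)
  case (less L)
  show ?case
  proof (intro allI impI)
    fix vs Y assume l: "length vs = L" and l2: "2 \<le> L" and Hv: "Hyp vs"
      and Ym: "\<forall>p\<in>ord_partitions (length vs - 1). Y p \<in> irr_prod vs irr p"
      and Ys: "(\<lambda>x. \<Sum>p\<in>ord_partitions (length vs - 1). Y p x) = (\<lambda>x. 0)"
    let ?m = "length vs - 1"
    have m1: "1 \<le> ?m" using l l2 by simp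
    have len: "2 \<le> length vs" using l l2 by simp
    define u where "u n = (\<lambda>x. \<Sum>p'\<in>ord_partitions (?m - n). Y (n # p') x)" for n
    have inparts: "n # p' \<in> ord_partitions ?m" if "n \<in> {1..<?m}" "p' \<in> ord_partitions (?m - n)" for n p'
      using that parts_dec[OF m1] by blast
    have Ycons: "Y (n # p') \<in> TP n (irr (take (Suc n) vs)) (irr_prod (drop n vs) irr p')"
      if n: "n \<in> {1..<?m}" and p': "p' \<in> ord_partitions (?m - n)" for n p'
      using Ym inparts[OF n p'] irr_prod_cons[OF Hv, of n p'] n by auto
    have irrn: "is_irr_space src tgt G (take (Suc n) vs) (irr (take (Suc n) vs))" if n: "n \<in> {1..<?m}" for n
      by (rule Hyp_prefix[OF Hv]) (use n in auto)
    have uT: "\<forall>n\<in>{1..<length vs - 1}. u n \<in> TP n (irr (take (Suc n) vs)) (PS (drop n vs))"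
    proof
      fix n assume n: "n \<in> {1..<length vs - 1}"
      have ld: "2 \<le> length (drop n vs)" using n by auto
      show "u n \<in> TP n (irr (take (Suc n) vs)) (PS (drop n vs))" unfolding u_def
      proof (rule subsp_setsum[OF subsp_TP], intro ballI)
        fix p' assume p': "p' \<in> ord_partitions (?m - n)"
        have "irr_prod (drop n vs) irr p' \<subseteq> IV (drop n vs)"
          by (rule D1'[OF ld Hyp_drop[OF Hv]]) (use p' in simp)
        then have "irr_prod (drop n vs) irr p' \<subseteq> PS (drop n vs)" using IV_P by blast
        from TP_mono[OF subset_refl this] Ycons[OF n p']
        show "Y (n # p') \<in> TP n (irr (take (Suc n) vs)) (PS (drop n vs))" by blast
      qed
    qed
    have sum0: "Y [?m] x + (\<Sum>n\<in>{1..<?m}. u n x) = 0" for x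
      using fun_cong[OF Ys, of x] parts_sum[OF m1, of "\<lambda>p. Y p x"] unfolding u_def by simp
    have irrv: "is_irr_space src tgt G vs (irr vs)" by (rule Hyp_self[OF Hv len])
    have Ym0: "Y [?m] = (\<lambda>x. 0)"
    proof -
      have "[?m] \<in> ord_partitions ?m" using parts_dec[OF m1] by blast
      then have Yi: "Y [?m] \<in> irr vs" using Ym irr_prod_single[OF len Hv] by auto
      have uW: "(\<lambda>x. \<Sum>n\<in>{1..<?m}. u n x) \<in> W vs ?m"
      proof (rule subsp_setsum[OF subsp_W], intro ballI)
        fix n assume n: "n \<in> {1..<?m}"
        have "u n \<in> TP n (IV (take (Suc n) vs)) (PS (drop n vs))"
          using TP_mono[OF irr_props(2)[OF irrn[OF n]] subset_refl] uT n by blast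
        then show "u n \<in> W vs ?m" by (rule W_TP[OF n])
      qed
      have "Y [?m] = (\<lambda>x. - (\<Sum>n\<in>{1..<?m}. u n x))"
      proof
        fix x show "Y [?m] x = - (\<Sum>n\<in>{1..<?m}. u n x)" using sum0[of x] by (simp add: eq_neg_iff_add_eq_0)
      qed
      then have "Y [?m] \<in> W vs ?m" using subsp_neg[OF subsp_W uW] by simp
      then show ?thesis using Q[OF len Hv] Yi by simp
    qed
    have "(\<lambda>x. \<Sum>n\<in>{1..?m - 1}. u n x) = (\<lambda>x. 0)"
    proof
      fix x
      have "{1..?m - 1} = {1..<?m}" using m1 by auto
      then show "(\<Sum>n\<in>{1..?m - 1}. u n x) = 0" using sum0[of x] Ym0 by simp
    qed
    from DIR[OF len Hv uT _ this] have u0: "\<forall>n\<in>{1..?m - 1}. u n = (\<lambda>x. 0)" using m1 by simp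
    have cons0: "\<forall>p'\<in>ord_partitions (?m - n). Y (n # p') = (\<lambda>x. 0)" if n: "n \<in> {1..<?m}" for n
    proof -
      have ld: "length (drop n vs) < L" "2 \<le> length (drop n vs)" using n l by auto
      have ih: "\<forall>vs'. length vs' = length (drop n vs) \<longrightarrow> 2 \<le> length (drop n vs) \<longrightarrow> Hyp vs' \<longrightarrow>
        (\<forall>Y. (\<forall>p\<in>ord_partitions (length vs' - 1). Y p \<in> irr_prod vs' irr p) \<longrightarrow>
         (\<lambda>x. \<Sum>p\<in>ord_partitions (length vs' - 1). Y p x) = (\<lambda>x. 0) \<longrightarrow>
         (\<forall>p\<in>ord_partitions (length vs' - 1). Y p = (\<lambda>x. 0)))" by (rule less.IH[OF ld(1)])
      have inj0: "\<forall>Y. (\<forall>p\<in>ord_partitions (length (drop n vs) - 1). Y p \<in> irr_prod (drop n vs) irr p) \<longrightarrow>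
         (\<lambda>x. \<Sum>p\<in>ord_partitions (length (drop n vs) - 1). Y p x) = (\<lambda>x. 0) \<longrightarrow>
         (\<forall>p\<in>ord_partitions (length (drop n vs) - 1). Y p = (\<lambda>x. 0))"
        by (rule mp[OF mp[OF mp[OF ih[THEN spec[of _ "drop n vs"]] refl] ld(2)] Hyp_drop[OF Hv]])
      have ldm: "length (drop n vs) - 1 = ?m - n" by simp
      have inj: "\<forall>w. (\<forall>p\<in>ord_partitions (?m - n). w p \<in> irr_prod (drop n vs) irr p) \<longrightarrow>
         (\<lambda>x. \<Sum>p\<in>ord_partitions (?m - n). w p x) = (\<lambda>x. 0) \<longrightarrow>
         (\<forall>p\<in>ord_partitions (?m - n). w p = (\<lambda>x. 0))" using inj0 unfolding ldm .
      have lt: "length (take (Suc n) vs) = Suc n" using n by auto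
      have A: "\<forall>a\<in>irr (take (Suc n) vs). \<forall>x. length x \<noteq> n \<longrightarrow> a x = 0"
      proof (intro ballI)
        fix a assume "a \<in> irr (take (Suc n) vs)"
        then have "a \<in> PS (take (Suc n) vs)" using irr_props(2)[OF irrn[OF n]] IV_P by blast
        from pspace_vanish[OF this lt] show "\<forall>x. length x \<noteq> n \<longrightarrow> a x = 0" .
      qed
      have Bs: "\<forall>p\<in>ord_partitions (?m - n). subsp (irr_prod (drop n vs) irr p)" by (simp add: subsp_irr_prod)
      have v: "\<forall>p'\<in>ord_partitions (?m - n). (\<lambda>p'. Y (n # p')) p' \<in> TP n (irr (take (Suc n) vs)) (irr_prod (drop n vs) irr p')"
        using Ycons[OF n] by simp
      have "u n = (\<lambda>x. 0)" using u0 n by auto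
      then have s: "(\<lambda>x. \<Sum>p'\<in>ord_partitions (?m - n). (\<lambda>p'. Y (n # p')) p' x) = (\<lambda>x. 0)" unfolding u_def by simp
      from LS[OF A Bs inj v s] show ?thesis by simp
    qed
    show "\<forall>p\<in>ord_partitions ?m. Y p = (\<lambda>x. 0)"
    proof
      fix p assume p: "p \<in> ord_partitions ?m"
      show "Y p = (\<lambda>x. 0)" using m1 p
      proof (cases rule: part_cases)
        case 1 then show ?thesis using Ym0 by simp
      next
        case (2 n p') then show ?thesis using cons0 by simp
      qed
    qed
  qed
qed

lemma final:
  assumes len: "2 \<le> length vs" and Hv: "Hyp vs"
  shows "bij_betw (\<lambda>y x. \<Sum>p\<in>ord_partitions (length vs - 1). y p x)
           (PiE (ord_partitions (length vs - 1)) (irr_prod vs irr)) (IV vs)"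
proof -
  let ?P = "ord_partitions (length vs - 1)" and ?X = "irr_prod vs irr"
  let ?F = "\<lambda>y x. \<Sum>p\<in>?P. y p x"
  have D1v: "\<forall>p\<in>?P. ?X p \<subseteq> IV vs" using D1'[OF len Hv] by blast
  have D2v: "IV vs \<subseteq> sumset ?P ?X"
    by (rule mp[OF mp[OF mp[OF D2[THEN spec[of _ vs]] refl] len] Hv])
  have D3v: "\<forall>Y. (\<forall>p\<in>?P. Y p \<in> ?X p) \<longrightarrow> (\<lambda>x. \<Sum>p\<in>?P. Y p x) = (\<lambda>x. 0) \<longrightarrow> (\<forall>p\<in>?P. Y p = (\<lambda>x. 0))"
    by (rule mp[OF mp[OF mp[OF D3[THEN spec[of _ vs]] refl] len] Hv])
  show ?thesis unfolding bij_betw_def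
  proof
    show "inj_on ?F (PiE ?P ?X)"
    proof (rule inj_onI)
      fix Y1 Y2 assume Y1: "Y1 \<in> PiE ?P ?X" and Y2: "Y2 \<in> PiE ?P ?X" and eq: "?F Y1 = ?F Y2"
      define Yd where "Yd p = (\<lambda>x. Y1 p x - Y2 p x)" for p
      have Ydm: "\<forall>p\<in>?P. Yd p \<in> ?X p"
      proof
        fix p assume p: "p \<in> ?P"
        have "Y1 p \<in> ?X p" "Y2 p \<in> ?X p" using Y1 Y2 p by (auto simp: PiE_iff)
        then show "Yd p \<in> ?X p" unfolding Yd_def by (rule subsp_diff[OF subsp_irr_prod])
      qed
      have "(\<lambda>x. \<Sum>p\<in>?P. Yd p x) = (\<lambda>x. 0)"
      proof
        fix x show "(\<Sum>p\<in>?P. Yd p x) = 0" using fun_cong[OF eq, of x] unfolding Yd_def by (simp add: sum_subtractf)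
      qed
      then have z: "\<forall>p\<in>?P. Yd p = (\<lambda>x. 0)" using D3v Ydm by blast
      show "Y1 = Y2"
      proof (rule PiE_ext[OF Y1 Y2])
        fix p assume "p \<in> ?P"
        then have yd: "Yd p = (\<lambda>x. 0)" using z by blast
        show "Y1 p = Y2 p"
        proof (rule ext)
          fix x
          have "Y1 p x - Y2 p x = 0" using fun_cong[OF yd, of x] unfolding Yd_def by simp
          then show "Y1 p x = Y2 p x" by simp
        qed
      qed
    qed
    show "?F ` PiE ?P ?X = IV vs"
    proof
      show "?F ` PiE ?P ?X \<subseteq> IV vs"
      proof (rule image_subsetI)
        fix Y assume Y: "Y \<in> PiE ?P ?X"
        show "?F Y \<in> IV vs" by (rule subsp_setsum[OF subsp_IV]) (use Y D1v in \<open>auto simp: PiE_iff\<close>)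
      qed
      show "IV vs \<subseteq> ?F ` PiE ?P ?X"
      proof
        fix y assume "y \<in> IV vs"
        then have "y \<in> sumset ?P ?X" using D2v by blast
        then obtain w where w: "y = (\<lambda>x. \<Sum>p\<in>?P. w p x)" "\<forall>p\<in>?P. w p \<in> ?X p" by (rule sumsetE)
        have r: "restrict w ?P \<in> PiE ?P ?X" using w(2) by (simp add: restrict_PiE_iff)
        have "?F (restrict w ?P) = (\<lambda>x. \<Sum>p\<in>?P. w p x)"
        proof (rule ext)
          fix x show "?F (restrict w ?P) x = (\<Sum>p\<in>?P. w p x)" by (simp add: restrict_def)
        qed
        then have "y = ?F (restrict w ?P)" using w(1) by simp
        then show "y \<in> ?F ` PiE ?P ?X" by (rule image_eqI[OF _ r])
      qed
    qed
  qed
qed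

end


theorem mainTheorem3:
  fixes src tgt :: "'a \<Rightarrow> 'v"
    and G :: "('a \<Rightarrow> 'a \<Rightarrow> 'k::field) set"
    and vs :: "'v list"
    and irr :: "'v list \<Rightarrow> ('a list \<Rightarrow> 'k) set"
  assumes "\<forall>i j. finite {a. src a = i \<and> tgt a = j}"
    and "homog_group src tgt G"
    and "is_path_space src tgt vs"
    and "\<forall>s n. 1 \<le> n \<and> s + n < length vs \<longrightarrow>
           is_irr_space src tgt G (seg vs s n) (irr (seg vs s n))"
  shows "bij_betw (\<lambda>y x. \<Sum>p\<in>ord_partitions (length vs - 1). y p x)
           (PiE (ord_partitions (length vs - 1)) (irr_prod vs irr))
           (invariants src tgt G vs)"
  proof -
  interpret q: qctx src tgt G irr using assms(1) by unfold_locales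
  have len: "2 \<le> length vs" using assms(3) unfolding is_path_space_def by simp
  from q.final[OF len assms(4)] show ?thesis by simp
qed

end
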